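(* Let $f:A\to B$ and $g:D\to C$. Then the composite $\mathsf1\cong\mathsf1\otimes\mathsf1\xrightarrow{\hat f\otimes\hat g}(A^\perp⅋B)\otimes(C⅋D^\perp)\xrightarrow{\tau_{A^\perp,B,C,D^\perp}}A^\perp⅋(B\otimes C)⅋D^\perp\cong(D^\perp⅋A^\perp)⅋(B\otimes C)$ equals $\widehat{f\otimes g}:\mathsf1\to(D^\perp⅋A^\perp)⅋(B\otimes C)$.
   Context: Write ⅋ for par. Let $\mathcal C$ be a $*$-autonomous category: symmetric monoidal $(\mathcal C,\otimes,\mathsf1)$ with contravariant $(-)^\perp$, $A^{\perp\perp}\cong A$, natural bijections (curryfication) $\mathrm{Hom}(A\otimes B^\perp,C)\cong\mathrm{Hom}(A,C⅋B)$, where $A⅋B=(B^\perp\otimes A^\perp)^\perp$; by symmetry one can also curryfy on the left. Evaluations $\epsilon_B:(C⅋B)\otimes B^\perp\to C$ and $B^\perp\otimes(B⅋C)\to C$ are the de-curryfications of identities. The name of a map $f:A\to B$ is $\hat f:\mathsf1\to A^\perp⅋B$, the curryfication of $f\circ\rho_A:A\otimes\mathsf1\to B$ (up to symmetry, also viewed as $\mathsf1\to B⅋A^\perp$). The internal tensor $\tau_{A,B,C,D}:(A⅋B)\otimes(C⅋D)\to A⅋(B\otimes C)⅋D$ is obtained by curryfying twice (left and right) the map $\epsilon_A\otimes\epsilon_D:A^\perp\otimes(A⅋B)\otimes(C⅋D)\otimes D^\perp\to B\otimes C$. Unnamed isomorphisms are the canonical coherence isomorphisms. *)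

theory Defs
  imports Main
begin

(* A *-autonomous category, presented (following Barr) as a symmetric monoidal
   closed category with a dualizing object Bot.
   Cmp g f is the composite "g after f".  Tm is the tensor on morphisms.
   Asc A B C : (A*B)*C -> A*(B*C),  Lu A : 1*A -> A,  Ru A : A*1 -> A,
   Sy A B : A*B -> B*A,  Ev B C : (B -o C)*B -> C  (evaluation of the
   internal hom Ihom B C = B -o C).  A^perp := A -o Bot. *)

record ('o,'m) sacat =
  Arr :: "'m set"
  Dom :: "'m \<Rightarrow> 'o"
  Cod :: "'m \<Rightarrow> 'o"
  Cmp :: "'m \<Rightarrow> 'm \<Rightarrow> 'm"
  Idm :: "'o \<Rightarrow> 'm"
  Tn :: "'o \<Rightarrow> 'o \<Rightarrow> 'o"
  Tm :: "'m \<Rightarrow> 'm \<Rightarrow> 'm"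
  Unit :: "'o"
  Asc :: "'o \<Rightarrow> 'o \<Rightarrow> 'o \<Rightarrow> 'm"
  Lu :: "'o \<Rightarrow> 'm"
  Ru :: "'o \<Rightarrow> 'm"
  Sy :: "'o \<Rightarrow> 'o \<Rightarrow> 'm"
  Ihom :: "'o \<Rightarrow> 'o \<Rightarrow> 'o"
  Ev :: "'o \<Rightarrow> 'o \<Rightarrow> 'm"
  Bot :: "'o"

definition hom :: "('o,'m) sacat \<Rightarrow> 'o \<Rightarrow> 'o \<Rightarrow> 'm set" where
  "hom S A B = {f \<in> Arr S. Dom S f = A \<and> Cod S f = B}"

definition is_iso :: "('o,'m) sacat \<Rightarrow> 'm \<Rightarrow> bool" where
  "is_iso S f \<longleftrightarrow> f \<in> Arr S \<and> (\<exists>g \<in> hom S (Cod S f) (Dom S f).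
      Cmp S g f = Idm S (Dom S f) \<and> Cmp S f g = Idm S (Cod S f))"

definition inv_arr :: "('o,'m) sacat \<Rightarrow> 'm \<Rightarrow> 'm" where
  "inv_arr S f = (THE g. g \<in> hom S (Cod S f) (Dom S f) \<and>
      Cmp S g f = Idm S (Dom S f) \<and> Cmp S f g = Idm S (Cod S f))"

definition lam :: "('o,'m) sacat \<Rightarrow> 'o \<Rightarrow> 'o \<Rightarrow> 'o \<Rightarrow> 'm \<Rightarrow> 'm" where
  "lam S A B C f = (THE h. h \<in> hom S A (Ihom S B C) \<and>
      Cmp S (Ev S B C) (Tm S h (Idm S B)) = f)"

definition dl :: "('o,'m) sacat \<Rightarrow> 'o \<Rightarrow> 'o" where
  "dl S A = Ihom S A (Bot S)"

definition dlm :: "('o,'m) sacat \<Rightarrow> 'm \<Rightarrow> 'm" where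
  "dlm S f = lam S (dl S (Cod S f)) (Dom S f) (Bot S)
      (Cmp S (Ev S (Cod S f) (Bot S)) (Tm S (Idm S (dl S (Cod S f))) f))"

definition dd :: "('o,'m) sacat \<Rightarrow> 'o \<Rightarrow> 'm" where
  "dd S A = lam S A (dl S A) (Bot S) (Cmp S (Ev S A (Bot S)) (Sy S A (dl S A)))"

locale star_autonomous =
  fixes S :: "('o,'m) sacat"
  assumes idm_hom: "Idm S A \<in> hom S A A"
    and cmp_hom: "\<lbrakk>f \<in> Arr S; g \<in> Arr S; Cod S f = Dom S g\<rbrakk>
        \<Longrightarrow> Cmp S g f \<in> hom S (Dom S f) (Cod S g)"
    and idm_left: "f \<in> Arr S \<Longrightarrow> Cmp S (Idm S (Cod S f)) f = f"
    and idm_right: "f \<in> Arr S \<Longrightarrow> Cmp S f (Idm S (Dom S f)) = f"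
    and cmp_assoc: "\<lbrakk>f \<in> Arr S; g \<in> Arr S; h \<in> Arr S; Cod S f = Dom S g; Cod S g = Dom S h\<rbrakk>
        \<Longrightarrow> Cmp S h (Cmp S g f) = Cmp S (Cmp S h g) f"
    and tm_hom: "\<lbrakk>f \<in> Arr S; g \<in> Arr S\<rbrakk>
        \<Longrightarrow> Tm S f g \<in> hom S (Tn S (Dom S f) (Dom S g)) (Tn S (Cod S f) (Cod S g))"
    and tm_idm: "Tm S (Idm S A) (Idm S B) = Idm S (Tn S A B)"
    and tm_cmp: "\<lbrakk>f \<in> Arr S; f' \<in> Arr S; g \<in> Arr S; g' \<in> Arr S;
        Cod S f = Dom S f'; Cod S g = Dom S g'\<rbrakk>
        \<Longrightarrow> Tm S (Cmp S f' f) (Cmp S g' g) = Cmp S (Tm S f' g') (Tm S f g)"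
    and asc_hom: "Asc S A B C \<in> hom S (Tn S (Tn S A B) C) (Tn S A (Tn S B C))"
    and asc_iso: "is_iso S (Asc S A B C)"
    and asc_nat: "\<lbrakk>f \<in> Arr S; g \<in> Arr S; h \<in> Arr S\<rbrakk>
        \<Longrightarrow> Cmp S (Asc S (Cod S f) (Cod S g) (Cod S h)) (Tm S (Tm S f g) h)
          = Cmp S (Tm S f (Tm S g h)) (Asc S (Dom S f) (Dom S g) (Dom S h))"
    and lu_hom: "Lu S A \<in> hom S (Tn S (Unit S) A) A"
    and lu_iso: "is_iso S (Lu S A)"
    and lu_nat: "f \<in> Arr S \<Longrightarrow>
        Cmp S (Lu S (Cod S f)) (Tm S (Idm S (Unit S)) f) = Cmp S f (Lu S (Dom S f))"
    and ru_hom: "Ru S A \<in> hom S (Tn S A (Unit S)) A"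
    and ru_iso: "is_iso S (Ru S A)"
    and ru_nat: "f \<in> Arr S \<Longrightarrow>
        Cmp S (Ru S (Cod S f)) (Tm S f (Idm S (Unit S))) = Cmp S f (Ru S (Dom S f))"
    and pentagon: "Cmp S (Asc S A B (Tn S C D)) (Asc S (Tn S A B) C D)
        = Cmp S (Tm S (Idm S A) (Asc S B C D))
            (Cmp S (Asc S A (Tn S B C) D) (Tm S (Asc S A B C) (Idm S D)))"
    and triangle: "Cmp S (Tm S (Idm S A) (Lu S B)) (Asc S A (Unit S) B)
        = Tm S (Ru S A) (Idm S B)"
    and sy_hom: "Sy S A B \<in> hom S (Tn S A B) (Tn S B A)"
    and sy_nat: "\<lbrakk>f \<in> Arr S; g \<in> Arr S\<rbrakk>
        \<Longrightarrow> Cmp S (Sy S (Cod S f) (Cod S g)) (Tm S f g) = Cmp S (Tm S g f) (Sy S (Dom S f) (Dom S g))"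
    and sy_inv: "Cmp S (Sy S B A) (Sy S A B) = Idm S (Tn S A B)"
    and hexagon: "Cmp S (Asc S B C A) (Cmp S (Sy S A (Tn S B C)) (Asc S A B C))
        = Cmp S (Tm S (Idm S B) (Sy S A C)) (Cmp S (Asc S B A C) (Tm S (Sy S A B) (Idm S C)))"
    and ev_hom: "Ev S B C \<in> hom S (Tn S (Ihom S B C) B) C"
    and closed: "f \<in> hom S (Tn S A B) C \<Longrightarrow>
        \<exists>!h. h \<in> hom S A (Ihom S B C) \<and> Cmp S (Ev S B C) (Tm S h (Idm S B)) = f"
    and dualizing: "is_iso S (dd S A)"

definition par :: "('o,'m) sacat \<Rightarrow> 'o \<Rightarrow> 'o \<Rightarrow> 'o" where
  "par S X Y = dl S (Tn S (dl S Y) (dl S X))"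

definition parm :: "('o,'m) sacat \<Rightarrow> 'm \<Rightarrow> 'm \<Rightarrow> 'm" where
  "parm S u v = dlm S (Tm S (dlm S v) (dlm S u))"

definition psym :: "('o,'m) sacat \<Rightarrow> 'o \<Rightarrow> 'o \<Rightarrow> 'm" where
  "psym S X Y = dlm S (Sy S (dl S X) (dl S Y))"

(* associativity of par:  X par (Y par Z) -> (X par Y) par Z *)
definition pa :: "('o,'m) sacat \<Rightarrow> 'o \<Rightarrow> 'o \<Rightarrow> 'o \<Rightarrow> 'm" where
  "pa S X Y Z = dlm S
     (Cmp S (Tm S (dd S (Tn S (dl S Z) (dl S Y))) (Idm S (dl S X)))
       (Cmp S (inv_arr S (Asc S (dl S Z) (dl S Y) (dl S X)))
          (Tm S (Idm S (dl S Z)) (inv_arr S (dd S (Tn S (dl S Y) (dl S X)))))))"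

(* curryfication  Hom(A * B^perp, C) -> Hom(A, C par B), the canonical one *)
definition cur :: "('o,'m) sacat \<Rightarrow> 'o \<Rightarrow> 'o \<Rightarrow> 'o \<Rightarrow> 'm \<Rightarrow> 'm" where
  "cur S A B C f = lam S A (Tn S (dl S B) (dl S C)) (Bot S)
     (Cmp S (Cmp S (Ev S (dl S C) (Bot S)) (Tm S (Cmp S (dd S C) f) (Idm S (dl S C))))
        (inv_arr S (Asc S A (dl S B) (dl S C))))"

(* left curryfication  Hom(B^perp * A, C) -> Hom(A, B par C), via symmetry *)
definition lcur :: "('o,'m) sacat \<Rightarrow> 'o \<Rightarrow> 'o \<Rightarrow> 'o \<Rightarrow> 'm \<Rightarrow> 'm" where
  "lcur S B A C g = Cmp S (psym S C B) (cur S A B C (Cmp S g (Sy S A (dl S B))))"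

definition rev :: "('o,'m) sacat \<Rightarrow> 'o \<Rightarrow> 'o \<Rightarrow> 'm" where
  "rev S C B = (THE e. e \<in> hom S (Tn S (par S C B) (dl S B)) C \<and>
      cur S (par S C B) B C e = Idm S (par S C B))"

definition lev :: "('o,'m) sacat \<Rightarrow> 'o \<Rightarrow> 'o \<Rightarrow> 'm" where
  "lev S B C = (THE e. e \<in> hom S (Tn S (dl S B) (par S B C)) C \<and>
      lcur S B (par S B C) C e = Idm S (par S B C))"

(* internal tensor  tau_{A,B,C,D} : (A par B) * (C par D) -> A par ((B * C) par D) *)
definition tau :: "('o,'m) sacat \<Rightarrow> 'o \<Rightarrow> 'o \<Rightarrow> 'o \<Rightarrow> 'o \<Rightarrow> 'm" where
  "tau S A B C D =
    (let P = par S A B; Q = par S C D;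
         m = Tm S (lev S A B) (rev S C D);
         al = Cmp S (Asc S (Tn S (dl S A) P) Q (dl S D))
                (Tm S (inv_arr S (Asc S (dl S A) P Q)) (Idm S (dl S D)));
         r = cur S (Tn S (dl S A) (Tn S P Q)) D (Tn S B C) (Cmp S m al)
     in lcur S A (Tn S P Q) (par S (Tn S B C) D) r)"

(* name of f : A -> B,  a map  1 -> A^perp par B *)
definition name :: "('o,'m) sacat \<Rightarrow> 'm \<Rightarrow> 'm" where
  "name S f = lcur S (dl S (Dom S f)) (Unit S) (Cod S f)
     (Cmp S f (Cmp S (Ru S (Dom S f)) (Tm S (inv_arr S (dd S (Dom S f))) (Idm S (Unit S)))))"

end

theory Submission
  imports Defs
begin

definition unc :: "('o,'m) sacat \<Rightarrow> 'o \<Rightarrow> 'm \<Rightarrow> 'm" where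
  "unc S Y h = Cmp S (Ev S Y (Bot S)) (Tm S h (Idm S Y))"

context star_autonomous
begin

lemma idm_simps[simp]: "Idm S A \<in> Arr S" "Dom S (Idm S A) = A" "Cod S (Idm S A) = A"
  using idm_hom[of A] by (auto simp: hom_def)

lemma cmp_simps[simp]:
  assumes "f \<in> Arr S" "g \<in> Arr S" "Cod S f = Dom S g"
  shows "Cmp S g f \<in> Arr S" "Dom S (Cmp S g f) = Dom S f" "Cod S (Cmp S g f) = Cod S g"
  using cmp_hom[OF assms] by (auto simp: hom_def)

lemma tm_simps[simp]:
  assumes "f \<in> Arr S" "g \<in> Arr S"
  shows "Tm S f g \<in> Arr S" "Dom S (Tm S f g) = Tn S (Dom S f) (Dom S g)"
    "Cod S (Tm S f g) = Tn S (Cod S f) (Cod S g)"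
  using tm_hom[OF assms] by (auto simp: hom_def)

lemma asc_simps[simp]: "Asc S A B C \<in> Arr S" "Dom S (Asc S A B C) = Tn S (Tn S A B) C"
  "Cod S (Asc S A B C) = Tn S A (Tn S B C)"
  using asc_hom[of A B C] by (auto simp: hom_def)
lemma lu_simps[simp]: "Lu S A \<in> Arr S" "Dom S (Lu S A) = Tn S (Unit S) A" "Cod S (Lu S A) = A"
  using lu_hom[of A] by (auto simp: hom_def)
lemma ru_simps[simp]: "Ru S A \<in> Arr S" "Dom S (Ru S A) = Tn S A (Unit S)" "Cod S (Ru S A) = A"
  using ru_hom[of A] by (auto simp: hom_def)
lemma sy_simps[simp]: "Sy S A B \<in> Arr S" "Dom S (Sy S A B) = Tn S A B" "Cod S (Sy S A B) = Tn S B A"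
  using sy_hom[of A B] by (auto simp: hom_def)

lemma dl_fold[simp]: "Ihom S Y (Bot S) = dl S Y" by (simp add: dl_def)

lemma ev_simps[simp]: "Ev S B C \<in> Arr S" "Dom S (Ev S B C) = Tn S (Ihom S B C) B" "Cod S (Ev S B C) = C"
  using ev_hom[of B C] by (auto simp: hom_def)

lemma assoc[simp]:
  "\<lbrakk>f \<in> Arr S; g \<in> Arr S; h \<in> Arr S; Cod S f = Dom S g; Cod S g = Dom S h\<rbrakk>
   \<Longrightarrow> Cmp S (Cmp S h g) f = Cmp S h (Cmp S g f)"
  using cmp_assoc by simp

lemma idl[simp]: "\<lbrakk>f \<in> Arr S; Cod S f = A\<rbrakk> \<Longrightarrow> Cmp S (Idm S A) f = f"
  using idm_left by blast
lemma idr[simp]: "\<lbrakk>f \<in> Arr S; Dom S f = A\<rbrakk> \<Longrightarrow> Cmp S f (Idm S A) = f"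
  using idm_right by blast

declare tm_idm[simp]

lemma inv_unique:
  assumes f: "f \<in> Arr S" and g: "g \<in> hom S (Cod S f) (Dom S f)" "Cmp S g f = Idm S (Dom S f)"
   and g': "g' \<in> hom S (Cod S f) (Dom S f)" "Cmp S f g' = Idm S (Cod S f)"
  shows "g = g'"
proof -
  have a: "g \<in> Arr S" "Dom S g = Cod S f" "Cod S g = Dom S f" "g' \<in> Arr S" "Dom S g' = Cod S f" "Cod S g' = Dom S f"
    using g g' by (auto simp: hom_def)
  have "g = Cmp S g (Idm S (Cod S f))" using a by simp
  also have "\<dots> = Cmp S g (Cmp S f g')" using g' by simp
  also have "\<dots> = Cmp S (Cmp S g f) g'" using a f by (intro cmp_assoc) auto
  also have "\<dots> = g'" using a g by simp
  finally show ?thesis .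
qed

lemma iso_inv:
  assumes "is_iso S f"
  shows "inv_arr S f \<in> Arr S" "Dom S (inv_arr S f) = Cod S f" "Cod S (inv_arr S f) = Dom S f"
    "Cmp S (inv_arr S f) f = Idm S (Dom S f)" "Cmp S f (inv_arr S f) = Idm S (Cod S f)"
proof -
  obtain g where g: "g \<in> hom S (Cod S f) (Dom S f)" "Cmp S g f = Idm S (Dom S f)" "Cmp S f g = Idm S (Cod S f)"
    and f: "f \<in> Arr S" using assms unfolding is_iso_def by blast
  have "inv_arr S f = g" unfolding inv_arr_def
    apply (rule the_equality) using g apply blast
    using inv_unique[OF f] g by blast
  then show "inv_arr S f \<in> Arr S" "Dom S (inv_arr S f) = Cod S f" "Cod S (inv_arr S f) = Dom S f"
    "Cmp S (inv_arr S f) f = Idm S (Dom S f)" "Cmp S f (inv_arr S f) = Idm S (Cod S f)"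
    using g by (auto simp: hom_def)
qed

lemma iso_arr[simp]: "is_iso S f \<Longrightarrow> f \<in> Arr S"
  unfolding is_iso_def by blast

lemma inv_simps[simp]:
  assumes "is_iso S f"
  shows "inv_arr S f \<in> Arr S" "Dom S (inv_arr S f) = Cod S f" "Cod S (inv_arr S f) = Dom S f"
  using iso_inv[OF assms] by auto

lemma inv_cancel[simp]:
  assumes "is_iso S f" "h \<in> Arr S"
  shows "Cod S h = Dom S f \<Longrightarrow> Cmp S (inv_arr S f) (Cmp S f h) = h"
    "Cod S h = Cod S f \<Longrightarrow> Cmp S f (Cmp S (inv_arr S f) h) = h"
proof -
  have f: "f \<in> Arr S" using assms(1) unfolding is_iso_def by blast
  note i = iso_inv[OF assms(1)]
  show "Cod S h = Dom S f \<Longrightarrow> Cmp S (inv_arr S f) (Cmp S f h) = h"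
  proof -
    assume c: "Cod S h = Dom S f"
    have "Cmp S (inv_arr S f) (Cmp S f h) = Cmp S (Cmp S (inv_arr S f) f) h"
      by (rule cmp_assoc) (use i f assms(2) c in auto)
    also have "\<dots> = h" using i(4) c assms(2) by simp
    finally show ?thesis .
  qed
  show "Cod S h = Cod S f \<Longrightarrow> Cmp S f (Cmp S (inv_arr S f) h) = h"
  proof -
    assume c: "Cod S h = Cod S f"
    have "Cmp S f (Cmp S (inv_arr S f) h) = Cmp S (Cmp S f (inv_arr S f)) h"
      by (rule cmp_assoc) (use i f assms(2) c in auto)
    also have "\<dots> = h" using i(5) c assms(2) by simp
    finally show ?thesis .
  qed
qed

lemma inv_cancel0[simp]:
  assumes "is_iso S f"
  shows "Cmp S (inv_arr S f) f = Idm S (Dom S f)" "Cmp S f (inv_arr S f) = Idm S (Cod S f)"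
  using iso_inv[OF assms] by auto

declare asc_iso[simp] lu_iso[simp] ru_iso[simp] dualizing[simp]


lemma tm_merge[simp]:
  "\<lbrakk>f \<in> Arr S; f' \<in> Arr S; g \<in> Arr S; g' \<in> Arr S; Cod S f = Dom S f'; Cod S g = Dom S g'\<rbrakk>
   \<Longrightarrow> Cmp S (Tm S f' g') (Tm S f g) = Tm S (Cmp S f' f) (Cmp S g' g)"
  using tm_cmp by simp

lemma tm_merge_k[simp]:
  "\<lbrakk>f \<in> Arr S; f' \<in> Arr S; g \<in> Arr S; g' \<in> Arr S; Cod S f = Dom S f'; Cod S g = Dom S g';
    k \<in> Arr S; Cod S k = Tn S (Dom S f) (Dom S g)\<rbrakk>
   \<Longrightarrow> Cmp S (Tm S f' g') (Cmp S (Tm S f g) k) = Cmp S (Tm S (Cmp S f' f) (Cmp S g' g)) k"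
  using tm_merge cmp_assoc[of k "Tm S f g" "Tm S f' g'"] by (simp del: assoc)

lemma lam_prop:
  assumes "f \<in> Arr S" "Dom S f = Tn S A B" "Cod S f = C"
  shows "lam S A B C f \<in> Arr S" "Dom S (lam S A B C f) = A" "Cod S (lam S A B C f) = Ihom S B C"
        "Cmp S (Ev S B C) (Tm S (lam S A B C f) (Idm S B)) = f"
proof -
  have "f \<in> hom S (Tn S A B) C" using assms by (simp add: hom_def)
  from theI'[OF closed[OF this]]
  have "lam S A B C f \<in> hom S A (Ihom S B C) \<and> Cmp S (Ev S B C) (Tm S (lam S A B C f) (Idm S B)) = f"
    unfolding lam_def .
  then show "lam S A B C f \<in> Arr S" "Dom S (lam S A B C f) = A" "Cod S (lam S A B C f) = Ihom S B C"
        "Cmp S (Ev S B C) (Tm S (lam S A B C f) (Idm S B)) = f" by (auto simp: hom_def)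
qed

lemma lam_simps[simp]:
  assumes "f \<in> Arr S" "Dom S f = Tn S A B" "Cod S f = C"
  shows "lam S A B C f \<in> Arr S" "Dom S (lam S A B C f) = A" "Cod S (lam S A B C f) = Ihom S B C"
  using lam_prop[OF assms] by auto

lemma lam_unique:
  assumes "h \<in> Arr S" "Dom S h = A" "Cod S h = Ihom S B C" "Cmp S (Ev S B C) (Tm S h (Idm S B)) = f"
  shows "lam S A B C f = h"
proof -
  have "f \<in> hom S (Tn S A B) C" using assms by (auto simp: hom_def)
  from closed[OF this] have "\<exists>!h. h \<in> hom S A (Ihom S B C) \<and> Cmp S (Ev S B C) (Tm S h (Idm S B)) = f" .
  moreover have "h \<in> hom S A (Ihom S B C) \<and> Cmp S (Ev S B C) (Tm S h (Idm S B)) = f"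
    using assms by (auto simp: hom_def)
  ultimately show ?thesis unfolding lam_def by (rule the1_equality)
qed

lemma unc_simps[simp]:
  assumes "h \<in> Arr S" "Cod S h = dl S Y"
  shows "unc S Y h \<in> Arr S" "Dom S (unc S Y h) = Tn S (Dom S h) Y" "Cod S (unc S Y h) = Bot S"
  using assms by (auto simp: unc_def)

lemma unc_inj:
  assumes "h \<in> Arr S" "h' \<in> Arr S" "Dom S h = Dom S h'" "Cod S h = dl S Y" "Cod S h' = dl S Y"
    "unc S Y h = unc S Y h'"
  shows "h = h'"
proof -
  have "lam S (Dom S h) Y (Bot S) (unc S Y h) = h" using assms(1,4) by (intro lam_unique) (auto simp: unc_def)
  moreover have "lam S (Dom S h') Y (Bot S) (unc S Y h') = h'" using assms(2,5) by (intro lam_unique) (auto simp: unc_def)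
  ultimately show ?thesis using assms(3,6) by metis
qed

lemma unc_lam[simp]:
  assumes "f \<in> Arr S" "Dom S f = Tn S A Y" "Cod S f = Bot S"
  shows "unc S Y (lam S A Y (Bot S) f) = f"
  using lam_prop[OF assms] by (simp add: unc_def)

lemma interchange:
  assumes "f \<in> Arr S" "g \<in> Arr S"
  shows "Cmp S (Tm S f (Idm S (Cod S g))) (Tm S (Idm S (Dom S f)) g) = Tm S f g"
        "Cmp S (Tm S (Idm S (Cod S f)) g) (Tm S f (Idm S (Dom S g))) = Tm S f g"
  using assms by simp_all

lemma unc_cmp:
  assumes "h \<in> Arr S" "k \<in> Arr S" "Cod S k = Dom S h" "Cod S h = dl S Y"
  shows "unc S Y (Cmp S h k) = Cmp S (unc S Y h) (Tm S k (Idm S Y))"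
  using assms by (simp add: unc_def)


lemma dlm_simps[simp]:
  assumes "f \<in> Arr S"
  shows "dlm S f \<in> Arr S" "Dom S (dlm S f) = dl S (Cod S f)" "Cod S (dlm S f) = dl S (Dom S f)"
  using assms by (simp_all add: dlm_def)

lemma unc_dlm:
  assumes "f \<in> Arr S" "X = Dom S f"
  shows "unc S X (dlm S f) = Cmp S (Ev S (Cod S f) (Bot S)) (Tm S (Idm S (dl S (Cod S f))) f)"
  using assms by (simp add: dlm_def)

lemma unc_dlm_cmp:
  assumes "u \<in> Arr S" "h \<in> Arr S" "Cod S h = dl S (Cod S u)" "X = Dom S u"
  shows "unc S X (Cmp S (dlm S u) h) = Cmp S (unc S (Cod S u) h) (Tm S (Idm S (Dom S h)) u)"
proof -
  have "unc S X (Cmp S (dlm S u) h) = Cmp S (unc S (Dom S u) (dlm S u)) (Tm S h (Idm S (Dom S u)))"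
    using assms by (simp add: unc_cmp)
  also have "\<dots> = Cmp S (unc S (Cod S u) h) (Tm S (Idm S (Dom S h)) u)"
    using assms by (simp add: unc_dlm, simp add: unc_def)
  finally show ?thesis .
qed

lemma dlm_idm[simp]: "dlm S (Idm S Y) = Idm S (dl S Y)"
  by (rule unc_inj[where Y=Y]) (simp_all add: unc_dlm, simp add: unc_def)

lemma dlm_cmp:
  assumes "u \<in> Arr S" "v \<in> Arr S" "Cod S u = Dom S v"
  shows "Cmp S (dlm S u) (dlm S v) = dlm S (Cmp S v u)"
proof (rule unc_inj[where Y="Dom S u"])
  show "unc S (Dom S u) (Cmp S (dlm S u) (dlm S v)) = unc S (Dom S u) (dlm S (Cmp S v u))"
    using assms by (simp add: unc_dlm_cmp unc_dlm)
qed (use assms in auto)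

lemma dd_simps[simp]: "dd S A \<in> Arr S" "Dom S (dd S A) = A" "Cod S (dd S A) = dl S (dl S A)"
  by (simp_all add: dd_def)

lemma unc_dd: "unc S (dl S A) (dd S A) = Cmp S (Ev S A (Bot S)) (Sy S A (dl S A))"
  by (simp add: dd_def)

lemma ev_dd: "Cmp S (Ev S (dl S A) (Bot S)) (Tm S (dd S A) (Idm S (dl S A))) = Cmp S (Ev S A (Bot S)) (Sy S A (dl S A))"
  using unc_dd by (simp add: unc_def)

lemma sy_nat':
  assumes "f \<in> Arr S" "g \<in> Arr S" "X = Cod S f" "Y = Cod S g"
  shows "Cmp S (Sy S X Y) (Tm S f g) = Cmp S (Tm S g f) (Sy S (Dom S f) (Dom S g))"
  using sy_nat assms by simp

lemma sy_nat_k: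
  assumes "f \<in> Arr S" "g \<in> Arr S" "X = Cod S f" "Y = Cod S g" "k \<in> Arr S" "Cod S k = Tn S (Dom S f) (Dom S g)"
  shows "Cmp S (Sy S X Y) (Cmp S (Tm S f g) k) = Cmp S (Tm S g f) (Cmp S (Sy S (Dom S f) (Dom S g)) k)"
proof -
  have "Cmp S (Sy S X Y) (Cmp S (Tm S f g) k) = Cmp S (Cmp S (Sy S X Y) (Tm S f g)) k"
    using assms by (intro cmp_assoc) auto
  also have "\<dots> = Cmp S (Cmp S (Tm S g f) (Sy S (Dom S f) (Dom S g))) k" using sy_nat' assms by simp
  also have "\<dots> = Cmp S (Tm S g f) (Cmp S (Sy S (Dom S f) (Dom S g)) k)" using assms by simp
  finally show ?thesis .
qed

lemma evdl:
  assumes "F \<in> Arr S" "Cod S F = dl S V"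
  shows "Cmp S (Ev S (dl S V) (Bot S)) (Tm S (Idm S (dl S (dl S V))) F)
    = Cmp S (unc S V F) (Cmp S (Tm S (Idm S (Dom S F)) (inv_arr S (dd S V))) (Sy S (dl S (dl S V)) (Dom S F)))"
proof -
  have "Tm S (Idm S (dl S (dl S V))) F = Cmp S (Tm S (dd S V) (Idm S (dl S V))) (Tm S (inv_arr S (dd S V)) F)"
    using assms by simp
  then have "Cmp S (Ev S (dl S V) (Bot S)) (Tm S (Idm S (dl S (dl S V))) F)
     = Cmp S (Cmp S (Ev S (dl S V) (Bot S)) (Tm S (dd S V) (Idm S (dl S V)))) (Tm S (inv_arr S (dd S V)) F)"
    using assms by simp
  also have "\<dots> = Cmp S (Cmp S (Ev S V (Bot S)) (Sy S V (dl S V))) (Tm S (inv_arr S (dd S V)) F)"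
    by (simp add: ev_dd)
  also have "\<dots> = Cmp S (Ev S V (Bot S)) (Cmp S (Sy S V (dl S V)) (Tm S (inv_arr S (dd S V)) F))"
    using assms by simp
  also have "\<dots> = Cmp S (Ev S V (Bot S)) (Cmp S (Tm S F (inv_arr S (dd S V))) (Sy S (dl S (dl S V)) (Dom S F)))"
    using assms by (subst sy_nat') auto
  also have "\<dots> = Cmp S (unc S V F) (Cmp S (Tm S (Idm S (Dom S F)) (inv_arr S (dd S V))) (Sy S (dl S (dl S V)) (Dom S F)))"
    using assms by (simp add: unc_def)
  finally show ?thesis .
qed


lemma iso_swap:
  assumes a: "is_iso S a" and b: "is_iso S b" and x: "x \<in> Arr S" and y: "y \<in> Arr S"
    and t: "Cod S x = Dom S a" "Dom S y = Cod S b" "Dom S x = Dom S b" "Cod S y = Cod S a"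
    and e: "Cmp S a x = Cmp S y b"
  shows "Cmp S (inv_arr S a) y = Cmp S x (inv_arr S b)"
proof -
  have "Cmp S (inv_arr S a) y = Cmp S (inv_arr S a) (Cmp S (Cmp S y b) (inv_arr S b))"
    using assms by (simp del: tm_merge tm_merge_k)
  also have "\<dots> = Cmp S (inv_arr S a) (Cmp S (Cmp S a x) (inv_arr S b))" using e by simp
  also have "\<dots> = Cmp S x (inv_arr S b)" using a b x y t by simp
  finally show ?thesis .
qed

lemma asc_inv_nat:
  assumes "f \<in> Arr S" "g \<in> Arr S" "h \<in> Arr S"
  shows "Cmp S (inv_arr S (Asc S (Cod S f) (Cod S g) (Cod S h))) (Tm S f (Tm S g h))
    = Cmp S (Tm S (Tm S f g) h) (inv_arr S (Asc S (Dom S f) (Dom S g) (Dom S h)))"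
  by (rule iso_swap) (use assms asc_nat in auto)

lemma asc_inv_nat_k:
  assumes "f \<in> Arr S" "g \<in> Arr S" "h \<in> Arr S" "k \<in> Arr S" "Cod S k = Tn S (Dom S f) (Tn S (Dom S g) (Dom S h))"
  shows "Cmp S (inv_arr S (Asc S (Cod S f) (Cod S g) (Cod S h))) (Cmp S (Tm S f (Tm S g h)) k)
    = Cmp S (Tm S (Tm S f g) h) (Cmp S (inv_arr S (Asc S (Dom S f) (Dom S g) (Dom S h))) k)"
proof -
  have "Cmp S (inv_arr S (Asc S (Cod S f) (Cod S g) (Cod S h))) (Cmp S (Tm S f (Tm S g h)) k)
   = Cmp S (Cmp S (inv_arr S (Asc S (Cod S f) (Cod S g) (Cod S h))) (Tm S f (Tm S g h))) k"
    using assms by (intro cmp_assoc) auto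
  also have "\<dots> = Cmp S (Cmp S (Tm S (Tm S f g) h) (inv_arr S (Asc S (Dom S f) (Dom S g) (Dom S h)))) k"
    using asc_inv_nat assms by simp
  finally show ?thesis using assms by simp
qed

lemma asc_nat_k:
  assumes "f \<in> Arr S" "g \<in> Arr S" "h \<in> Arr S" "k \<in> Arr S" "Cod S k = Tn S (Tn S (Dom S f) (Dom S g)) (Dom S h)"
  shows "Cmp S (Asc S (Cod S f) (Cod S g) (Cod S h)) (Cmp S (Tm S (Tm S f g) h) k)
    = Cmp S (Tm S f (Tm S g h)) (Cmp S (Asc S (Dom S f) (Dom S g) (Dom S h)) k)"
proof -
  have "Cmp S (Asc S (Cod S f) (Cod S g) (Cod S h)) (Cmp S (Tm S (Tm S f g) h) k)
   = Cmp S (Cmp S (Asc S (Cod S f) (Cod S g) (Cod S h)) (Tm S (Tm S f g) h)) k"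
    using assms by (intro cmp_assoc) auto
  also have "\<dots> = Cmp S (Cmp S (Tm S f (Tm S g h)) (Asc S (Dom S f) (Dom S g) (Dom S h))) k"
    using asc_nat assms by simp
  finally show ?thesis using assms by simp
qed

declare par_def[simp]

lemma cur_simps[simp]:
  assumes "F \<in> Arr S" "Dom S F = Tn S U (dl S B)" "Cod S F = C"
  shows "cur S U B C F \<in> Arr S" "Dom S (cur S U B C F) = U" "Cod S (cur S U B C F) = dl S (Tn S (dl S B) (dl S C))"
  using assms by (simp_all add: cur_def)

lemma unc_cur0:
  assumes "F \<in> Arr S" "Dom S F = Tn S U (dl S B)" "Cod S F = C"
  shows "unc S (Tn S (dl S B) (dl S C)) (cur S U B C F) =
    Cmp S (Ev S (dl S C) (Bot S)) (Cmp S (Tm S (Cmp S (dd S C) F) (Idm S (dl S C))) (inv_arr S (Asc S U (dl S B) (dl S C))))"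
  using assms by (simp add: cur_def)

lemma unc_cur:
  assumes "F \<in> Arr S" "Dom S F = Tn S U (dl S B)" "Cod S F = C"
  shows "unc S (Tn S (dl S B) (dl S C)) (cur S U B C F) =
    Cmp S (Ev S C (Bot S)) (Cmp S (Sy S C (dl S C)) (Cmp S (Tm S F (Idm S (dl S C))) (inv_arr S (Asc S U (dl S B) (dl S C)))))"
proof -
  have "Tm S (Cmp S (dd S C) F) (Idm S (dl S C)) = Cmp S (Tm S (dd S C) (Idm S (dl S C))) (Tm S F (Idm S (dl S C)))"
    using assms by simp
  then show ?thesis using assms ev_dd[of C] cmp_assoc[of _ "Tm S (dd S C) (Idm S (dl S C))" "Ev S (dl S C) (Bot S)"]
    by (simp add: unc_cur0 del: tm_merge tm_merge_k)
qed

lemma cur_inj: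
  assumes "F \<in> Arr S" "Dom S F = Tn S U (dl S B)" "Cod S F = C"
    "F' \<in> Arr S" "Dom S F' = Tn S U (dl S B)" "Cod S F' = C"
    "cur S U B C F = cur S U B C F'"
  shows "F = F'"
proof -
  have "Cmp S (Ev S (dl S C) (Bot S)) (Cmp S (Tm S (Cmp S (dd S C) F) (Idm S (dl S C))) (inv_arr S (Asc S U (dl S B) (dl S C))))
     = Cmp S (Ev S (dl S C) (Bot S)) (Cmp S (Tm S (Cmp S (dd S C) F') (Idm S (dl S C))) (inv_arr S (Asc S U (dl S B) (dl S C))))"
    using unc_cur0[OF assms(1-3), symmetric] unc_cur0[OF assms(4-6)] assms(7) by (simp only:)
  then have "Cmp S (Cmp S (Ev S (dl S C) (Bot S)) (Cmp S (Tm S (Cmp S (dd S C) F) (Idm S (dl S C))) (inv_arr S (Asc S U (dl S B) (dl S C))))) (Asc S U (dl S B) (dl S C))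
     = Cmp S (Cmp S (Ev S (dl S C) (Bot S)) (Cmp S (Tm S (Cmp S (dd S C) F') (Idm S (dl S C))) (inv_arr S (Asc S U (dl S B) (dl S C))))) (Asc S U (dl S B) (dl S C))"
    by simp
  then have u: "unc S (dl S C) (Cmp S (dd S C) F) = unc S (dl S C) (Cmp S (dd S C) F')"
    using assms by (simp add: unc_def del: tm_merge tm_merge_k)
  have "Cmp S (dd S C) F = Cmp S (dd S C) F'"
    by (rule unc_inj[where Y="dl S C", OF _ _ _ _ _ u]) (use assms(1-6) in simp_all)
  then have "Cmp S (inv_arr S (dd S C)) (Cmp S (dd S C) F) = Cmp S (inv_arr S (dd S C)) (Cmp S (dd S C) F')" by simp
  then show ?thesis using assms(1-6) by simp
qed

lemma cur_surj:
  assumes "h \<in> Arr S" "Dom S h = U" "Cod S h = dl S (Tn S (dl S B) (dl S C))"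
  shows "\<exists>F. F \<in> Arr S \<and> Dom S F = Tn S U (dl S B) \<and> Cod S F = C \<and> cur S U B C F = h"
proof -
  define F where "F = Cmp S (inv_arr S (dd S C)) (lam S (Tn S U (dl S B)) (dl S C) (Bot S)
      (Cmp S (unc S (Tn S (dl S B) (dl S C)) h) (Asc S U (dl S B) (dl S C))))"
  have F: "F \<in> Arr S" "Dom S F = Tn S U (dl S B)" "Cod S F = C" using assms by (simp_all add: F_def)
  have u: "unc S (Tn S (dl S B) (dl S C)) (cur S U B C F) = unc S (Tn S (dl S B) (dl S C)) h"
  proof -
    have eq: "Cmp S (dd S C) F = lam S (Tn S U (dl S B)) (dl S C) (Bot S)
      (Cmp S (unc S (Tn S (dl S B) (dl S C)) h) (Asc S U (dl S B) (dl S C)))"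
      using assms by (simp add: F_def)
    have "unc S (Tn S (dl S B) (dl S C)) (cur S U B C F) =
      Cmp S (Ev S (dl S C) (Bot S)) (Cmp S (Tm S (Cmp S (dd S C) F) (Idm S (dl S C))) (inv_arr S (Asc S U (dl S B) (dl S C))))"
      using F by (rule unc_cur0)
    also have "\<dots> = Cmp S (Ev S (dl S C) (Bot S)) (Cmp S (Tm S (lam S (Tn S U (dl S B)) (dl S C) (Bot S)
      (Cmp S (unc S (Tn S (dl S B) (dl S C)) h) (Asc S U (dl S B) (dl S C)))) (Idm S (dl S C))) (inv_arr S (Asc S U (dl S B) (dl S C))))"
      by (simp only: eq)
    also have "\<dots> = Cmp S (unc S (dl S C) (lam S (Tn S U (dl S B)) (dl S C) (Bot S)
      (Cmp S (unc S (Tn S (dl S B) (dl S C)) h) (Asc S U (dl S B) (dl S C))))) (inv_arr S (Asc S U (dl S B) (dl S C)))"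
      using assms by (simp add: unc_def del: unc_lam)
    also have "\<dots> = unc S (Tn S (dl S B) (dl S C)) h" using assms by simp
    finally show ?thesis .
  qed
  have "cur S U B C F = h" by (rule unc_inj[OF _ _ _ _ _ u]) (use F assms in simp_all)
  then show ?thesis using F by blast
qed


lemma asc_inv_nat1:
  assumes "k \<in> Arr S"
  shows "Cmp S (inv_arr S (Asc S (Cod S k) B C)) (Tm S k (Idm S (Tn S B C)))
    = Cmp S (Tm S (Tm S k (Idm S B)) (Idm S C)) (inv_arr S (Asc S (Dom S k) B C))"
  using asc_inv_nat[of k "Idm S B" "Idm S C"] assms by simp

lemma cur_nat:
  assumes "F \<in> Arr S" "Dom S F = Tn S U (dl S B)" "Cod S F = C" "k \<in> Arr S" "Cod S k = U"
  shows "Cmp S (cur S U B C F) k = cur S (Dom S k) B C (Cmp S F (Tm S k (Idm S (dl S B))))"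
proof -
  have a: "Cmp S (inv_arr S (Asc S U (dl S B) (dl S C))) (Tm S k (Idm S (Tn S (dl S B) (dl S C))))
    = Cmp S (Tm S (Tm S k (Idm S (dl S B))) (Idm S (dl S C))) (inv_arr S (Asc S (Dom S k) (dl S B) (dl S C)))"
    using asc_inv_nat1[of k "dl S B" "dl S C"] assms by simp
  have u: "unc S (Tn S (dl S B) (dl S C)) (Cmp S (cur S U B C F) k) = unc S (Tn S (dl S B) (dl S C)) (cur S (Dom S k) B C (Cmp S F (Tm S k (Idm S (dl S B)))))"
  proof -
    have "unc S (Tn S (dl S B) (dl S C)) (Cmp S (cur S U B C F) k) =
      Cmp S (unc S (Tn S (dl S B) (dl S C)) (cur S U B C F)) (Tm S k (Idm S (Tn S (dl S B) (dl S C))))"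
      using assms by (intro unc_cmp) auto
    also have "\<dots> = Cmp S (Ev S C (Bot S)) (Cmp S (Sy S C (dl S C)) (Cmp S (Tm S F (Idm S (dl S C)))
       (Cmp S (inv_arr S (Asc S U (dl S B) (dl S C))) (Tm S k (Idm S (Tn S (dl S B) (dl S C)))))))"
      using assms by (simp add: unc_cur)
    also have "\<dots> = Cmp S (Ev S C (Bot S)) (Cmp S (Sy S C (dl S C)) (Cmp S (Tm S F (Idm S (dl S C)))
       (Cmp S (Tm S (Tm S k (Idm S (dl S B))) (Idm S (dl S C))) (inv_arr S (Asc S (Dom S k) (dl S B) (dl S C))))))"
      by (simp only: a)
    also have "\<dots> = unc S (Tn S (dl S B) (dl S C)) (cur S (Dom S k) B C (Cmp S F (Tm S k (Idm S (dl S B)))))"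
      using assms by (simp add: unc_cur)
    finally show ?thesis .
  qed
  show ?thesis by (rule unc_inj[OF _ _ _ _ _ u]) (use assms in simp_all)
qed

lemma rev_prop:
  shows "rev S C B \<in> Arr S" "Dom S (rev S C B) = Tn S (dl S (Tn S (dl S B) (dl S C))) (dl S B)"
    "Cod S (rev S C B) = C" "cur S (dl S (Tn S (dl S B) (dl S C))) B C (rev S C B) = Idm S (dl S (Tn S (dl S B) (dl S C)))"
proof -
  have ex: "\<exists>!e. e \<in> hom S (Tn S (par S C B) (dl S B)) C \<and> cur S (par S C B) B C e = Idm S (par S C B)"
  proof -
    obtain F where F: "F \<in> Arr S" "Dom S F = Tn S (par S C B) (dl S B)" "Cod S F = C"
      "cur S (par S C B) B C F = Idm S (par S C B)"
      using cur_surj[of "Idm S (par S C B)" "par S C B" B C] by auto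
    show ?thesis
    proof (rule ex1I[of _ F])
      show "F \<in> hom S (Tn S (par S C B) (dl S B)) C \<and> cur S (par S C B) B C F = Idm S (par S C B)"
        using F by (simp add: hom_def)
      fix e assume e: "e \<in> hom S (Tn S (par S C B) (dl S B)) C \<and> cur S (par S C B) B C e = Idm S (par S C B)"
      then have c: "cur S (par S C B) B C e = cur S (par S C B) B C F" using F(4) by simp
      have eh: "e \<in> Arr S" "Dom S e = Tn S (par S C B) (dl S B)" "Cod S e = C" using e by (auto simp: hom_def)
      show "e = F" by (rule cur_inj[OF eh F(1-3) c])
    qed
  qed
  from theI'[OF ex] show "rev S C B \<in> Arr S" "Dom S (rev S C B) = Tn S (dl S (Tn S (dl S B) (dl S C))) (dl S B)"
    "Cod S (rev S C B) = C" "cur S (dl S (Tn S (dl S B) (dl S C))) B C (rev S C B) = Idm S (dl S (Tn S (dl S B) (dl S C)))"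
    unfolding rev_def[symmetric] by (simp_all add: hom_def)
qed

lemma rev_simps[simp]: "rev S C B \<in> Arr S" "Dom S (rev S C B) = Tn S (dl S (Tn S (dl S B) (dl S C))) (dl S B)"
    "Cod S (rev S C B) = C"
  using rev_prop by auto

lemma rev_cur:
  assumes "F \<in> Arr S" "Dom S F = Tn S U (dl S B)" "Cod S F = C"
  shows "Cmp S (rev S C B) (Tm S (cur S U B C F) (Idm S (dl S B))) = F"
proof -
  have "cur S U B C (Cmp S (rev S C B) (Tm S (cur S U B C F) (Idm S (dl S B))))
    = Cmp S (cur S (dl S (Tn S (dl S B) (dl S C))) B C (rev S C B)) (cur S U B C F)"
    using assms by (subst cur_nat) auto
  also have "\<dots> = cur S U B C F" using assms by (simp add: rev_prop(4))
  finally have e: "cur S U B C (Cmp S (rev S C B) (Tm S (cur S U B C F) (Idm S (dl S B)))) = cur S U B C F" .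
  show ?thesis by (rule cur_inj[OF _ _ _ _ _ _ e]) (use assms in simp_all)
qed


lemma psym_simps[simp]: "psym S X Y \<in> Arr S" "Dom S (psym S X Y) = dl S (Tn S (dl S Y) (dl S X))"
  "Cod S (psym S X Y) = dl S (Tn S (dl S X) (dl S Y))"
  by (simp_all add: psym_def)

lemma psym_invol: "Cmp S (psym S Y X) (psym S X Y) = Idm S (dl S (Tn S (dl S Y) (dl S X)))"
  by (simp add: psym_def dlm_cmp sy_inv)

lemma psym_invol_k:
  assumes "h \<in> Arr S" "Cod S h = dl S (Tn S (dl S Y) (dl S X))"
  shows "Cmp S (psym S Y X) (Cmp S (psym S X Y) h) = h"
proof -
  have "Cmp S (psym S Y X) (Cmp S (psym S X Y) h) = Cmp S (Cmp S (psym S Y X) (psym S X Y)) h"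
    using assms by (intro cmp_assoc) auto
  then show ?thesis using assms by (simp add: psym_invol)
qed

lemma lcur_simps[simp]:
  assumes "g \<in> Arr S" "Dom S g = Tn S (dl S B) A" "Cod S g = C"
  shows "lcur S B A C g \<in> Arr S" "Dom S (lcur S B A C g) = A" "Cod S (lcur S B A C g) = dl S (Tn S (dl S C) (dl S B))"
  using assms by (simp_all add: lcur_def)

lemma lcur_nat:
  assumes "g \<in> Arr S" "Dom S g = Tn S (dl S B) A" "Cod S g = C" "k \<in> Arr S" "Cod S k = A"
  shows "Cmp S (lcur S B A C g) k = lcur S B (Dom S k) C (Cmp S g (Tm S (Idm S (dl S B)) k))"
proof -
  have "Cmp S (lcur S B A C g) k = Cmp S (psym S C B) (Cmp S (cur S A B C (Cmp S g (Sy S A (dl S B)))) k)"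
    using assms by (simp add: lcur_def)
  also have "\<dots> = Cmp S (psym S C B) (cur S (Dom S k) B C (Cmp S g (Cmp S (Sy S A (dl S B)) (Tm S k (Idm S (dl S B))))))"
    using assms by (subst cur_nat) auto
  also have "\<dots> = Cmp S (psym S C B) (cur S (Dom S k) B C (Cmp S g (Cmp S (Tm S (Idm S (dl S B)) k) (Sy S (Dom S k) (dl S B)))))"
    using assms sy_nat'[of k "Idm S (dl S B)" A "dl S B"] by simp
  also have "\<dots> = lcur S B (Dom S k) C (Cmp S g (Tm S (Idm S (dl S B)) k))"
    using assms by (simp add: lcur_def)
  finally show ?thesis .
qed

lemma lcur_inj:
  assumes "g \<in> Arr S" "Dom S g = Tn S (dl S B) A" "Cod S g = C"
    "g' \<in> Arr S" "Dom S g' = Tn S (dl S B) A" "Cod S g' = C"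
    "lcur S B A C g = lcur S B A C g'"
  shows "g = g'"
proof -
  have "Cmp S (psym S B C) (lcur S B A C g) = Cmp S (psym S B C) (lcur S B A C g')" using assms(7) by simp
  then have c: "cur S A B C (Cmp S g (Sy S A (dl S B))) = cur S A B C (Cmp S g' (Sy S A (dl S B)))"
    using assms(1-6) by (simp add: lcur_def psym_invol_k)
  have "Cmp S g (Sy S A (dl S B)) = Cmp S g' (Sy S A (dl S B))"
    by (rule cur_inj[OF _ _ _ _ _ _ c]) (use assms(1-6) in simp_all)
  then have "Cmp S (Cmp S g (Sy S A (dl S B))) (Sy S (dl S B) A) = Cmp S (Cmp S g' (Sy S A (dl S B))) (Sy S (dl S B) A)"
    by simp
  then show ?thesis using assms(1-6) by (simp add: sy_inv)
qed

lemma lcur_surj: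
  assumes "h \<in> Arr S" "Dom S h = A" "Cod S h = dl S (Tn S (dl S C) (dl S B))"
  shows "\<exists>g. g \<in> Arr S \<and> Dom S g = Tn S (dl S B) A \<and> Cod S g = C \<and> lcur S B A C g = h"
proof -
  obtain F where F: "F \<in> Arr S" "Dom S F = Tn S A (dl S B)" "Cod S F = C"
    "cur S A B C F = Cmp S (psym S B C) h"
    using cur_surj[of "Cmp S (psym S B C) h" A B C] assms by auto
  have "lcur S B A C (Cmp S F (Sy S (dl S B) A)) = Cmp S (psym S C B) (cur S A B C F)"
    using F(1-3) by (simp add: lcur_def sy_inv)
  also have "\<dots> = h" using assms by (simp only: F(4)) (simp add: psym_invol_k)
  finally show ?thesis using F by (intro exI[of _ "Cmp S F (Sy S (dl S B) A)"]) simp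
qed

lemma lev_prop:
  shows "lev S B C \<in> Arr S" "Dom S (lev S B C) = Tn S (dl S B) (dl S (Tn S (dl S C) (dl S B)))"
    "Cod S (lev S B C) = C" "lcur S B (dl S (Tn S (dl S C) (dl S B))) C (lev S B C) = Idm S (dl S (Tn S (dl S C) (dl S B)))"
proof -
  have ex: "\<exists>!e. e \<in> hom S (Tn S (dl S B) (par S B C)) C \<and> lcur S B (par S B C) C e = Idm S (par S B C)"
  proof -
    obtain F where F: "F \<in> Arr S" "Dom S F = Tn S (dl S B) (par S B C)" "Cod S F = C"
      "lcur S B (par S B C) C F = Idm S (par S B C)"
      using lcur_surj[of "Idm S (par S B C)" "par S B C" C B] by auto
    show ?thesis
    proof (rule ex1I[of _ F])
      show "F \<in> hom S (Tn S (dl S B) (par S B C)) C \<and> lcur S B (par S B C) C F = Idm S (par S B C)"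
        using F by (simp add: hom_def)
      fix e assume e: "e \<in> hom S (Tn S (dl S B) (par S B C)) C \<and> lcur S B (par S B C) C e = Idm S (par S B C)"
      then have c: "lcur S B (par S B C) C e = lcur S B (par S B C) C F" using F(4) by simp
      have eh: "e \<in> Arr S" "Dom S e = Tn S (dl S B) (par S B C)" "Cod S e = C" using e by (auto simp: hom_def)
      show "e = F" by (rule lcur_inj[OF eh F(1-3) c])
    qed
  qed
  from theI'[OF ex] show "lev S B C \<in> Arr S" "Dom S (lev S B C) = Tn S (dl S B) (dl S (Tn S (dl S C) (dl S B)))"
    "Cod S (lev S B C) = C" "lcur S B (dl S (Tn S (dl S C) (dl S B))) C (lev S B C) = Idm S (dl S (Tn S (dl S C) (dl S B)))"
    unfolding lev_def[symmetric] by (simp_all add: hom_def)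
qed

lemma lev_simps[simp]: "lev S B C \<in> Arr S" "Dom S (lev S B C) = Tn S (dl S B) (dl S (Tn S (dl S C) (dl S B)))"
    "Cod S (lev S B C) = C"
  using lev_prop by auto

lemma lev_lcur:
  assumes "g \<in> Arr S" "Dom S g = Tn S (dl S B) A" "Cod S g = C"
  shows "Cmp S (lev S B C) (Tm S (Idm S (dl S B)) (lcur S B A C g)) = g"
proof -
  have "lcur S B A C (Cmp S (lev S B C) (Tm S (Idm S (dl S B)) (lcur S B A C g)))
    = Cmp S (lcur S B (dl S (Tn S (dl S C) (dl S B))) C (lev S B C)) (lcur S B A C g)"
    using assms by (subst lcur_nat) auto
  also have "\<dots> = lcur S B A C g" using assms by (simp add: lev_prop(4))
  finally have e: "lcur S B A C (Cmp S (lev S B C) (Tm S (Idm S (dl S B)) (lcur S B A C g))) = lcur S B A C g" .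
  show ?thesis by (rule lcur_inj[OF _ _ _ _ _ _ e]) (use assms in simp_all)
qed


lemma post: "a = b \<Longrightarrow> Cmp S a k = Cmp S b k" by simp
lemma pre: "a = b \<Longrightarrow> Cmp S k a = Cmp S k b" by simp

lemma k_form:
  assumes "Cmp S a b = c" "a \<in> Arr S" "b \<in> Arr S" "k \<in> Arr S" "Cod S b = Dom S a" "Cod S k = Dom S b"
  shows "Cmp S a (Cmp S b k) = Cmp S c k"
  using assms cmp_assoc[of k b a] by simp

lemma lu_cancel:
  assumes "h \<in> Arr S" "k \<in> Arr S" "Dom S h = Dom S k" "Cod S h = Cod S k"
    "Tm S (Idm S (Unit S)) h = Tm S (Idm S (Unit S)) k"
  shows "h = k"
proof -
  have 1: "Cmp S h (Lu S (Dom S h)) = Cmp S (Lu S (Cod S h)) (Tm S (Idm S (Unit S)) h)" using lu_nat[OF assms(1)] by simp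
  have 2: "Cmp S k (Lu S (Dom S k)) = Cmp S (Lu S (Cod S k)) (Tm S (Idm S (Unit S)) k)" using lu_nat[OF assms(2)] by simp
  have "Cmp S h (Lu S (Dom S h)) = Cmp S k (Lu S (Dom S k))" unfolding 1 2 using assms(4,5) by simp
  then have "Cmp S (Cmp S h (Lu S (Dom S h))) (inv_arr S (Lu S (Dom S h))) = Cmp S (Cmp S k (Lu S (Dom S k))) (inv_arr S (Lu S (Dom S h)))"
    by simp
  then show ?thesis using assms(1-4) by simp
qed

lemma ru_cancel:
  assumes "h \<in> Arr S" "k \<in> Arr S" "Dom S h = Dom S k" "Cod S h = Cod S k"
    "Tm S h (Idm S (Unit S)) = Tm S k (Idm S (Unit S))"
  shows "h = k"
proof -
  have 1: "Cmp S h (Ru S (Dom S h)) = Cmp S (Ru S (Cod S h)) (Tm S h (Idm S (Unit S)))" using ru_nat[OF assms(1)] by simp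
  have 2: "Cmp S k (Ru S (Dom S k)) = Cmp S (Ru S (Cod S k)) (Tm S k (Idm S (Unit S)))" using ru_nat[OF assms(2)] by simp
  have "Cmp S h (Ru S (Dom S h)) = Cmp S k (Ru S (Dom S k))" unfolding 1 2 using assms(4,5) by simp
  then have "Cmp S (Cmp S h (Ru S (Dom S h))) (inv_arr S (Ru S (Dom S h))) = Cmp S (Cmp S k (Ru S (Dom S k))) (inv_arr S (Ru S (Dom S h)))"
    by simp
  then show ?thesis using assms(1-4) by simp
qed

lemma lu_asc: "Cmp S (Lu S (Tn S A B)) (Asc S (Unit S) A B) = Tm S (Lu S A) (Idm S B)"
proof -
  let ?I = "Unit S"
  define P where "P = Cmp S (Asc S ?I (Tn S ?I A) B) (Tm S (Asc S ?I ?I A) (Idm S B))"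
  have P: "P \<in> Arr S" "Dom S P = Tn S (Tn S (Tn S ?I ?I) A) B" "Cod S P = Tn S ?I (Tn S (Tn S ?I A) B)"
    by (simp_all add: P_def)
  have "Cmp S (Tm S (Idm S ?I) (Cmp S (Lu S (Tn S A B)) (Asc S ?I A B))) P
     = Cmp S (Tm S (Idm S ?I) (Lu S (Tn S A B))) (Cmp S (Asc S ?I ?I (Tn S A B)) (Asc S (Tn S ?I ?I) A B))"
    by (simp add: P_def pentagon)
  also have "\<dots> = Cmp S (Tm S (Ru S ?I) (Idm S (Tn S A B))) (Asc S (Tn S ?I ?I) A B)"
    by (simp add: k_form[OF triangle])
  also have "\<dots> = Cmp S (Asc S ?I A B) (Tm S (Tm S (Ru S ?I) (Idm S A)) (Idm S B))"
    using asc_nat[of "Ru S ?I" "Idm S A" "Idm S B"] by simp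
  also have "\<dots> = Cmp S (Asc S ?I A B) (Tm S (Cmp S (Tm S (Idm S ?I) (Lu S A)) (Asc S ?I ?I A)) (Idm S B))"
    by (simp add: triangle)
  also have "\<dots> = Cmp S (Tm S (Idm S ?I) (Tm S (Lu S A) (Idm S B))) P"
  proof -
    have n: "Cmp S (Asc S ?I A B) (Tm S (Tm S (Idm S ?I) (Lu S A)) (Idm S B)) = Cmp S (Tm S (Idm S ?I) (Tm S (Lu S A) (Idm S B))) (Asc S ?I (Tn S ?I A) B)"
      using asc_nat[of "Idm S ?I" "Lu S A" "Idm S B"] by simp
    show ?thesis using post[OF n, of "Tm S (Asc S ?I ?I A) (Idm S B)"] by (simp add: P_def)
  qed
  finally have e: "Cmp S (Tm S (Idm S ?I) (Cmp S (Lu S (Tn S A B)) (Asc S ?I A B))) P = Cmp S (Tm S (Idm S ?I) (Tm S (Lu S A) (Idm S B))) P" .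
  define Q where "Q = Cmp S (Tm S (inv_arr S (Asc S ?I ?I A)) (Idm S B)) (inv_arr S (Asc S ?I (Tn S ?I A) B))"
  have PQ: "Cmp S P Q = Idm S (Tn S ?I (Tn S (Tn S ?I A) B))" by (simp add: P_def Q_def)
  have "Cmp S (Cmp S (Tm S (Idm S ?I) (Cmp S (Lu S (Tn S A B)) (Asc S ?I A B))) P) Q = Cmp S (Cmp S (Tm S (Idm S ?I) (Tm S (Lu S A) (Idm S B))) P) Q"
    using e by simp
  then have "Tm S (Idm S ?I) (Cmp S (Lu S (Tn S A B)) (Asc S ?I A B)) = Tm S (Idm S ?I) (Tm S (Lu S A) (Idm S B))"
    using PQ P cmp_assoc[of Q P] by (simp add: Q_def del: assoc)
  then show ?thesis by (rule lu_cancel[rotated 4]) simp_all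
qed


lemma sy_inv_k[simp]:
  assumes "k \<in> Arr S" "Cod S k = Tn S A B"
  shows "Cmp S (Sy S B A) (Cmp S (Sy S A B) k) = k"
  using assms k_form[OF sy_inv, where k=k] by simp

declare sy_inv[simp]

lemma ru_sy_gen: "Tm S (Ru S A) (Idm S B) = Tm S (Cmp S (Lu S A) (Sy S A (Unit S))) (Idm S B)"
proof -
  let ?I = "Unit S"
  have h: "Cmp S (Asc S ?I B A) (Cmp S (Sy S A (Tn S ?I B)) (Asc S A ?I B)) =
     Cmp S (Tm S (Idm S ?I) (Sy S A B)) (Cmp S (Asc S ?I A B) (Tm S (Sy S A ?I) (Idm S B)))"
    by (rule hexagon)
  have "Cmp S (Sy S A B) (Tm S (Ru S A) (Idm S B)) = Cmp S (Sy S A B) (Cmp S (Tm S (Idm S A) (Lu S B)) (Asc S A ?I B))"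
    by (simp add: triangle)
  also have "\<dots> = Cmp S (Tm S (Lu S B) (Idm S A)) (Cmp S (Sy S A (Tn S ?I B)) (Asc S A ?I B))"
    using post[OF sy_nat[of "Idm S A" "Lu S B"], of "Asc S A ?I B"] by simp
  also have "\<dots> = Cmp S (Lu S (Tn S B A)) (Cmp S (Asc S ?I B A) (Cmp S (Sy S A (Tn S ?I B)) (Asc S A ?I B)))"
    by (simp add: k_form[OF lu_asc])
  also have "\<dots> = Cmp S (Lu S (Tn S B A)) (Cmp S (Tm S (Idm S ?I) (Sy S A B)) (Cmp S (Asc S ?I A B) (Tm S (Sy S A ?I) (Idm S B))))"
    by (simp only: h)
  also have "\<dots> = Cmp S (Sy S A B) (Cmp S (Lu S (Tn S A B)) (Cmp S (Asc S ?I A B) (Tm S (Sy S A ?I) (Idm S B))))"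
    using post[OF lu_nat[of "Sy S A B"], of "Cmp S (Asc S ?I A B) (Tm S (Sy S A ?I) (Idm S B))"] by simp
  also have "\<dots> = Cmp S (Sy S A B) (Tm S (Cmp S (Lu S A) (Sy S A (Unit S))) (Idm S B))"
    by (simp add: k_form[OF lu_asc])
  finally have "Cmp S (Sy S B A) (Cmp S (Sy S A B) (Tm S (Ru S A) (Idm S B))) = Cmp S (Sy S B A) (Cmp S (Sy S A B) (Tm S (Cmp S (Lu S A) (Sy S A (Unit S))) (Idm S B)))"
    by simp
  then show ?thesis by simp
qed

lemma ru_sy': "Ru S A = Cmp S (Lu S A) (Sy S A (Unit S))"
  by (rule ru_cancel[OF _ _ _ _ ru_sy_gen]) simp_all

lemma ru_sy[simp]: "Cmp S (Ru S A) (Sy S (Unit S) A) = Lu S A"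
  by (simp add: ru_sy')

lemma ru_sy_k[simp]: "k \<in> Arr S \<Longrightarrow> Cod S k = Tn S (Unit S) A \<Longrightarrow> Cmp S (Ru S A) (Cmp S (Sy S (Unit S) A) k) = Cmp S (Lu S A) k"
  by (simp add: k_form)


lemma hex_inv: "Cmp S (inv_arr S (Asc S C A B)) (Cmp S (Sy S (Tn S A B) C) (inv_arr S (Asc S A B C)))
  = Cmp S (Tm S (Sy S A C) (Idm S B)) (Cmp S (inv_arr S (Asc S A C B)) (Tm S (Idm S A) (Sy S B C)))"
proof -
  let ?L' = "Cmp S (inv_arr S (Asc S C A B)) (Cmp S (Sy S (Tn S A B) C) (inv_arr S (Asc S A B C)))"
  let ?R' = "Cmp S (Tm S (Sy S A C) (Idm S B)) (Cmp S (inv_arr S (Asc S A C B)) (Tm S (Idm S A) (Sy S B C)))"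
  let ?L = "Cmp S (Asc S A B C) (Cmp S (Sy S C (Tn S A B)) (Asc S C A B))"
  let ?R = "Cmp S (Tm S (Idm S A) (Sy S C B)) (Cmp S (Asc S A C B) (Tm S (Sy S C A) (Idm S B)))"
  have h: "?L = ?R" by (rule hexagon)
  have "?L' = Cmp S ?L' (Cmp S ?R ?R')" by simp
  also have "\<dots> = Cmp S ?L' (Cmp S ?L ?R')" by (simp only: h)
  also have "\<dots> = ?R'" by simp
  finally show ?thesis .
qed

lemma rotation:
  "Cmp S (Sy S (Tn S a d) X) (Cmp S (inv_arr S (Asc S a d X)) (Cmp S (Sy S (Tn S d X) a) (Cmp S (inv_arr S (Asc S d X a))
     (Cmp S (Sy S (Tn S X a) d) (inv_arr S (Asc S X a d)))))) = Idm S (Tn S X (Tn S a d))"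
proof -
  have s3: "Cmp S (Sy S (Tn S X d) a) (inv_arr S (Asc S X d a)) =
     Cmp S (Asc S a X d) (Cmp S (Tm S (Sy S X a) (Idm S d)) (Cmp S (inv_arr S (Asc S X a d)) (Tm S (Idm S X) (Sy S d a))))"
    using pre[OF hex_inv[of a X d], of "Asc S a X d"] by simp
  have s2: "Cmp S (Sy S (Tn S d X) a) (Tm S (Sy S X d) (Idm S a)) = Cmp S (Tm S (Idm S a) (Sy S X d)) (Sy S (Tn S X d) a)"
    using sy_nat[of "Sy S X d" "Idm S a"] by simp
  have "Cmp S (Sy S (Tn S a d) X) (Cmp S (inv_arr S (Asc S a d X)) (Cmp S (Sy S (Tn S d X) a) (Cmp S (inv_arr S (Asc S d X a))
     (Cmp S (Sy S (Tn S X a) d) (inv_arr S (Asc S X a d))))))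
   = Cmp S (Sy S (Tn S a d) X) (Cmp S (inv_arr S (Asc S a d X)) (Cmp S (Sy S (Tn S d X) a) 
      (Cmp S (Tm S (Sy S X d) (Idm S a)) (Cmp S (inv_arr S (Asc S X d a)) (Tm S (Idm S X) (Sy S a d))))))"
    by (simp only: hex_inv)
  also have "\<dots> = Cmp S (Sy S (Tn S a d) X) (Cmp S (inv_arr S (Asc S a d X)) (Cmp S (Tm S (Idm S a) (Sy S X d))
      (Cmp S (Sy S (Tn S X d) a) (Cmp S (inv_arr S (Asc S X d a)) (Tm S (Idm S X) (Sy S a d))))))"
    by (simp add: k_form[OF s2])
  also have "\<dots> = Cmp S (Sy S (Tn S a d) X) (Cmp S (inv_arr S (Asc S a d X)) (Cmp S (Tm S (Idm S a) (Sy S X d))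
      (Cmp S (Asc S a X d) (Cmp S (Tm S (Sy S X a) (Idm S d)) (inv_arr S (Asc S X a d))))))"
    by (simp add: k_form[OF s3])
  also have "\<dots> = Cmp S (Sy S (Tn S a d) X) (Cmp S (inv_arr S (Asc S a d X)) (Cmp S (Asc S a d X)
      (Cmp S (Sy S X (Tn S a d)) (Cmp S (Asc S X a d) (inv_arr S (Asc S X a d))))))"
    using post[OF hexagon[where A=X and B=a and C=d, symmetric], of "inv_arr S (Asc S X a d)"] by simp
  also have "\<dots> = Idm S (Tn S X (Tn S a d))" by simp
  finally show ?thesis .
qed


lemma tau_names:
  assumes p: "p \<in> Arr S" "Dom S p = Tn S (dl S A') (Unit S)" "Cod S p = B"
      and q: "q \<in> Arr S" "Dom S q = Tn S (Unit S) (dl S D')" "Cod S q = C"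
  shows "Cmp S (tau S A' B C D') (Cmp S (Tm S (lcur S A' (Unit S) B p) (cur S (Unit S) D' C q)) (inv_arr S (Lu S (Unit S))))
     = lcur S A' (Unit S) (par S (Tn S B C) D') (cur S (Tn S (dl S A') (Unit S)) D' (Tn S B C)
         (Cmp S (Tm S p q) (Cmp S (Asc S (Tn S (dl S A') (Unit S)) (Unit S) (dl S D'))
            (Tm S (Cmp S (inv_arr S (Asc S (dl S A') (Unit S) (Unit S))) (Tm S (Idm S (dl S A')) (inv_arr S (Lu S (Unit S))))) (Idm S (dl S D'))))))"
proof -
  let ?I = "Unit S"
  let ?a = "dl S A'" and ?d = "dl S D'"
  let ?P = "par S A' B" and ?Q = "par S C D'"
  let ?W = "par S (Tn S B C) D'"
  let ?nf = "lcur S A' ?I B p" and ?ng = "cur S ?I D' C q"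
  let ?m = "Tm S (lev S A' B) (rev S C D')"
  let ?al = "Cmp S (Asc S (Tn S ?a ?P) ?Q ?d) (Tm S (inv_arr S (Asc S ?a ?P ?Q)) (Idm S ?d))"
  let ?r = "cur S (Tn S ?a (Tn S ?P ?Q)) D' (Tn S B C) (Cmp S ?m ?al)"
  have nf: "?nf \<in> Arr S" "Dom S ?nf = ?I" "Cod S ?nf = ?P" using p by simp_all
  have ng: "?ng \<in> Arr S" "Dom S ?ng = ?I" "Cod S ?ng = ?Q" using q by simp_all
  have t: "tau S A' B C D' = lcur S A' (Tn S ?P ?Q) ?W ?r"
    unfolding tau_def Let_def ..
  have r: "?r \<in> Arr S" "Dom S ?r = Tn S ?a (Tn S ?P ?Q)" "Cod S ?r = dl S (Tn S (dl S D') (dl S (Tn S B C)))"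
    by simp_all
  have s4: "Cmp S (Cmp S ?m ?al) (Tm S (Tm S (Idm S ?a) (Tm S ?nf ?ng)) (Idm S ?d))
     = Cmp S (Tm S p q) (Cmp S (Asc S (Tn S ?a ?I) ?I ?d) (Tm S (inv_arr S (Asc S ?a ?I ?I)) (Idm S ?d)))"
  proof -
    have n1: "Cmp S (inv_arr S (Asc S ?a ?P ?Q)) (Tm S (Idm S ?a) (Tm S ?nf ?ng))
       = Cmp S (Tm S (Tm S (Idm S ?a) ?nf) ?ng) (inv_arr S (Asc S ?a ?I ?I))"
      using asc_inv_nat[of "Idm S ?a" ?nf ?ng] nf ng by simp
    have n2: "Cmp S (Asc S (Tn S ?a ?P) ?Q ?d) (Tm S (Tm S (Tm S (Idm S ?a) ?nf) ?ng) (Idm S ?d))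
       = Cmp S (Tm S (Tm S (Idm S ?a) ?nf) (Tm S ?ng (Idm S ?d))) (Asc S (Tn S ?a ?I) ?I ?d)"
      using asc_nat[of "Tm S (Idm S ?a) ?nf" ?ng "Idm S ?d"] nf ng by simp
    have n3: "Cmp S ?m (Tm S (Tm S (Idm S ?a) ?nf) (Tm S ?ng (Idm S ?d))) = Tm S p q"
      using p q by (simp add: lev_lcur rev_cur)
    have "Cmp S (Cmp S ?m ?al) (Tm S (Tm S (Idm S ?a) (Tm S ?nf ?ng)) (Idm S ?d))
      = Cmp S ?m (Cmp S (Asc S (Tn S ?a ?P) ?Q ?d) (Tm S (Cmp S (inv_arr S (Asc S ?a ?P ?Q)) (Tm S (Idm S ?a) (Tm S ?nf ?ng))) (Idm S ?d)))"
      using nf ng by simp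
    also have "\<dots> = Cmp S ?m (Cmp S (Asc S (Tn S ?a ?P) ?Q ?d) (Tm S (Cmp S (Tm S (Tm S (Idm S ?a) ?nf) ?ng) (inv_arr S (Asc S ?a ?I ?I))) (Idm S ?d)))"
      by (simp only: n1)
    also have "\<dots> = Cmp S ?m (Cmp S (Cmp S (Asc S (Tn S ?a ?P) ?Q ?d) (Tm S (Tm S (Tm S (Idm S ?a) ?nf) ?ng) (Idm S ?d))) (Tm S (inv_arr S (Asc S ?a ?I ?I)) (Idm S ?d)))"
      using nf ng by simp
    also have "\<dots> = Cmp S ?m (Cmp S (Cmp S (Tm S (Tm S (Idm S ?a) ?nf) (Tm S ?ng (Idm S ?d))) (Asc S (Tn S ?a ?I) ?I ?d)) (Tm S (inv_arr S (Asc S ?a ?I ?I)) (Idm S ?d)))"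
      by (simp only: n2)
    also have "\<dots> = Cmp S (Cmp S ?m (Tm S (Tm S (Idm S ?a) ?nf) (Tm S ?ng (Idm S ?d)))) (Cmp S (Asc S (Tn S ?a ?I) ?I ?d) (Tm S (inv_arr S (Asc S ?a ?I ?I)) (Idm S ?d)))"
      using nf ng by (simp del: tm_merge tm_merge_k)
    also have "\<dots> = Cmp S (Tm S p q) (Cmp S (Asc S (Tn S ?a ?I) ?I ?d) (Tm S (inv_arr S (Asc S ?a ?I ?I)) (Idm S ?d)))"
      by (simp only: n3)
    finally show ?thesis .
  qed
  have "Cmp S (tau S A' B C D') (Cmp S (Tm S ?nf ?ng) (inv_arr S (Lu S ?I)))
     = Cmp S (Cmp S (tau S A' B C D') (Tm S ?nf ?ng)) (inv_arr S (Lu S ?I))"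
    using nf ng by (simp add: t del: tm_merge tm_merge_k)
  also have "Cmp S (tau S A' B C D') (Tm S ?nf ?ng) = lcur S A' (Tn S ?I ?I) ?W (Cmp S ?r (Tm S (Idm S ?a) (Tm S ?nf ?ng)))"
    unfolding t using nf ng r by (subst lcur_nat) simp_all
  also have "Cmp S ?r (Tm S (Idm S ?a) (Tm S ?nf ?ng)) = cur S (Tn S ?a (Tn S ?I ?I)) D' (Tn S B C)
       (Cmp S (Cmp S ?m ?al) (Tm S (Tm S (Idm S ?a) (Tm S ?nf ?ng)) (Idm S ?d)))"
    using nf ng by (subst cur_nat) simp_all
  also note s4
  also have "Cmp S (lcur S A' (Tn S ?I ?I) ?W (cur S (Tn S ?a (Tn S ?I ?I)) D' (Tn S B C)
       (Cmp S (Tm S p q) (Cmp S (Asc S (Tn S ?a ?I) ?I ?d) (Tm S (inv_arr S (Asc S ?a ?I ?I)) (Idm S ?d)))))) (inv_arr S (Lu S ?I))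
     = lcur S A' ?I ?W (Cmp S (cur S (Tn S ?a (Tn S ?I ?I)) D' (Tn S B C)
       (Cmp S (Tm S p q) (Cmp S (Asc S (Tn S ?a ?I) ?I ?d) (Tm S (inv_arr S (Asc S ?a ?I ?I)) (Idm S ?d))))) (Tm S (Idm S ?a) (inv_arr S (Lu S ?I))))"
    using p q by (subst lcur_nat) simp_all
  also have "Cmp S (cur S (Tn S ?a (Tn S ?I ?I)) D' (Tn S B C)
       (Cmp S (Tm S p q) (Cmp S (Asc S (Tn S ?a ?I) ?I ?d) (Tm S (inv_arr S (Asc S ?a ?I ?I)) (Idm S ?d))))) (Tm S (Idm S ?a) (inv_arr S (Lu S ?I)))
     = cur S (Tn S ?a ?I) D' (Tn S B C) (Cmp S (Cmp S (Tm S p q) (Cmp S (Asc S (Tn S ?a ?I) ?I ?d) (Tm S (inv_arr S (Asc S ?a ?I ?I)) (Idm S ?d))))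
          (Tm S (Tm S (Idm S ?a) (inv_arr S (Lu S ?I))) (Idm S ?d)))"
    using p q by (subst cur_nat) simp_all
  also have "Cmp S (Cmp S (Tm S p q) (Cmp S (Asc S (Tn S ?a ?I) ?I ?d) (Tm S (inv_arr S (Asc S ?a ?I ?I)) (Idm S ?d))))
          (Tm S (Tm S (Idm S ?a) (inv_arr S (Lu S ?I))) (Idm S ?d))
     = Cmp S (Tm S p q) (Cmp S (Asc S (Tn S ?a ?I) ?I ?d)
            (Tm S (Cmp S (inv_arr S (Asc S ?a ?I ?I)) (Tm S (Idm S ?a) (inv_arr S (Lu S ?I)))) (Idm S ?d)))"
    using p q by simp
  finally show ?thesis .
qed


lemma unc_psym:
  assumes "h \<in> Arr S" "Cod S h = dl S (Tn S (dl S Y) (dl S X))" "Z = Tn S (dl S X) (dl S Y)"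
  shows "unc S Z (Cmp S (psym S X Y) h) = Cmp S (unc S (Tn S (dl S Y) (dl S X)) h) (Tm S (Idm S (Dom S h)) (Sy S (dl S X) (dl S Y)))"
  using assms by (simp add: psym_def unc_dlm_cmp)

lemma unc_cur_dl:
  assumes "F \<in> Arr S" "Dom S F = Tn S U (dl S B)" "Cod S F = dl S V"
  shows "unc S (Tn S (dl S B) (dl S (dl S V))) (cur S U B (dl S V) F)
    = Cmp S (unc S V F) (Cmp S (Tm S (Idm S (Tn S U (dl S B))) (inv_arr S (dd S V))) (inv_arr S (Asc S U (dl S B) (dl S (dl S V)))))"
proof -
  have "unc S (Tn S (dl S B) (dl S (dl S V))) (cur S U B (dl S V) F) =
    Cmp S (Ev S (dl S V) (Bot S)) (Cmp S (Sy S (dl S V) (dl S (dl S V))) (Cmp S (Tm S F (Idm S (dl S (dl S V)))) (inv_arr S (Asc S U (dl S B) (dl S (dl S V))))))"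
    using assms by (rule unc_cur)
  also have "\<dots> = Cmp S (Ev S (dl S V) (Bot S)) (Cmp S (Tm S (Idm S (dl S (dl S V))) F) (Cmp S (Sy S (Tn S U (dl S B)) (dl S (dl S V))) (inv_arr S (Asc S U (dl S B) (dl S (dl S V))))))"
    using assms by (simp add: sy_nat_k)
  also have "\<dots> = Cmp S (unc S V F) (Cmp S (Tm S (Idm S (Tn S U (dl S B))) (inv_arr S (dd S V))) (inv_arr S (Asc S U (dl S B) (dl S (dl S V)))))"
    using post[OF evdl[of F V], of "Cmp S (Sy S (Tn S U (dl S B)) (dl S (dl S V))) (inv_arr S (Asc S U (dl S B) (dl S (dl S V))))"] assms
    by simp
  finally show ?thesis .
qed

lemma unc_lcur_dl:
  assumes "g \<in> Arr S" "Dom S g = Tn S (dl S B) A" "Cod S g = dl S V"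
  shows "unc S (Tn S (dl S (dl S V)) (dl S B)) (lcur S B A (dl S V) g)
    = Cmp S (unc S V g) (Cmp S (Tm S (Sy S A (dl S B)) (inv_arr S (dd S V))) (Cmp S (inv_arr S (Asc S A (dl S B) (dl S (dl S V)))) (Tm S (Idm S A) (Sy S (dl S (dl S V)) (dl S B)))))"
proof -
  have "unc S (Tn S (dl S (dl S V)) (dl S B)) (lcur S B A (dl S V) g)
    = Cmp S (unc S (Tn S (dl S B) (dl S (dl S V))) (cur S A B (dl S V) (Cmp S g (Sy S A (dl S B))))) (Tm S (Idm S A) (Sy S (dl S (dl S V)) (dl S B)))"
    unfolding lcur_def using assms by (subst unc_psym) simp_all
  also have "\<dots> = Cmp S (Cmp S (unc S V (Cmp S g (Sy S A (dl S B)))) (Cmp S (Tm S (Idm S (Tn S A (dl S B))) (inv_arr S (dd S V))) (inv_arr S (Asc S A (dl S B) (dl S (dl S V)))))) (Tm S (Idm S A) (Sy S (dl S (dl S V)) (dl S B)))"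
    using assms by (subst unc_cur_dl) simp_all
  also have "\<dots> = Cmp S (unc S V g) (Cmp S (Tm S (Sy S A (dl S B)) (inv_arr S (dd S V))) (Cmp S (inv_arr S (Asc S A (dl S B) (dl S (dl S V)))) (Tm S (Idm S A) (Sy S (dl S (dl S V)) (dl S B)))))"
    using assms by (simp add: unc_cmp)
  finally show ?thesis .
qed

lemma unc_lcur:
  assumes "g \<in> Arr S" "Dom S g = Tn S (dl S B) A" "Cod S g = C"
  shows "unc S (Tn S (dl S C) (dl S B)) (lcur S B A C g)
    = Cmp S (Ev S C (Bot S)) (Cmp S (Tm S (Idm S (dl S C)) (Cmp S g (Sy S A (dl S B)))) (Cmp S (Sy S (Tn S A (dl S B)) (dl S C)) (Cmp S (inv_arr S (Asc S A (dl S B) (dl S C))) (Tm S (Idm S A) (Sy S (dl S C) (dl S B))))))"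
proof -
  have "unc S (Tn S (dl S C) (dl S B)) (lcur S B A C g)
    = Cmp S (unc S (Tn S (dl S B) (dl S C)) (cur S A B C (Cmp S g (Sy S A (dl S B))))) (Tm S (Idm S A) (Sy S (dl S C) (dl S B)))"
    unfolding lcur_def using assms by (subst unc_psym) simp_all
  also have "\<dots> = Cmp S (Cmp S (Ev S C (Bot S)) (Cmp S (Sy S C (dl S C)) (Cmp S (Tm S (Cmp S g (Sy S A (dl S B))) (Idm S (dl S C))) (inv_arr S (Asc S A (dl S B) (dl S C)))))) (Tm S (Idm S A) (Sy S (dl S C) (dl S B)))"
    using assms by (subst unc_cur) simp_all
  also have "\<dots> = Cmp S (Ev S C (Bot S)) (Cmp S (Tm S (Idm S (dl S C)) (Cmp S g (Sy S A (dl S B)))) (Cmp S (Sy S (Tn S A (dl S B)) (dl S C)) (Cmp S (inv_arr S (Asc S A (dl S B) (dl S C))) (Tm S (Idm S A) (Sy S (dl S C) (dl S B))))))"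
    using assms by (simp add: sy_nat_k)
  finally show ?thesis .
qed

lemma lu_asc_inv: "Cmp S (Tm S (Lu S A) (Idm S B)) (inv_arr S (Asc S (Unit S) A B)) = Lu S (Tn S A B)"
  by (simp add: lu_asc[symmetric])

lemma dd_nat:
  assumes "v \<in> Arr S"
  shows "Cmp S (dlm S (dlm S v)) (dd S (Dom S v)) = Cmp S (dd S (Cod S v)) v"
proof -
  have u: "unc S (dl S (Cod S v)) (Cmp S (dlm S (dlm S v)) (dd S (Dom S v))) = unc S (dl S (Cod S v)) (Cmp S (dd S (Cod S v)) v)"
  proof -
    have "unc S (dl S (Cod S v)) (Cmp S (dlm S (dlm S v)) (dd S (Dom S v))) =
      Cmp S (unc S (dl S (Dom S v)) (dd S (Dom S v))) (Tm S (Idm S (Dom S v)) (dlm S v))"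
      using assms by (subst unc_dlm_cmp) simp_all
    also have "\<dots> = Cmp S (Ev S (Dom S v) (Bot S)) (Cmp S (Sy S (Dom S v) (dl S (Dom S v))) (Tm S (Idm S (Dom S v)) (dlm S v)))"
      using assms by (simp add: unc_dd)
    also have "\<dots> = Cmp S (unc S (Dom S v) (dlm S v)) (Sy S (Dom S v) (dl S (Cod S v)))"
      using assms by (simp add: sy_nat' unc_def)
    also have "\<dots> = Cmp S (Ev S (Cod S v) (Bot S)) (Cmp S (Tm S (Idm S (dl S (Cod S v))) v) (Sy S (Dom S v) (dl S (Cod S v))))"
      using assms by (simp add: unc_dlm)
    also have "\<dots> = Cmp S (Ev S (Cod S v) (Bot S)) (Cmp S (Sy S (Cod S v) (dl S (Cod S v))) (Tm S v (Idm S (dl S (Cod S v)))))"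
      using assms by (simp add: sy_nat')
    also have "\<dots> = unc S (dl S (Cod S v)) (Cmp S (dd S (Cod S v)) v)"
      using assms by (simp add: unc_cmp unc_dd)
    finally show ?thesis .
  qed
  show ?thesis by (rule unc_inj[OF _ _ _ _ _ u]) (use assms in simp_all)
qed

lemma dd_inv_nat:
  assumes "v \<in> Arr S"
  shows "Cmp S (inv_arr S (dd S (Cod S v))) (dlm S (dlm S v)) = Cmp S v (inv_arr S (dd S (Dom S v)))"
  by (rule iso_swap) (use assms dd_nat[OF assms] in simp_all)

lemma kprime:
  "Cmp S (Tm S (Ru S a) (Lu S d)) (Cmp S (Asc S (Tn S a (Unit S)) (Unit S) d)
      (Tm S (Cmp S (inv_arr S (Asc S a (Unit S) (Unit S))) (Tm S (Idm S a) (inv_arr S (Lu S (Unit S))))) (Idm S d)))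
   = Tm S (Ru S a) (Idm S d)"
proof -
  let ?I = "Unit S"
  have a: "Tm S (Ru S a) (Lu S d) = Cmp S (Tm S (Idm S a) (Lu S d)) (Cmp S (Tm S (Idm S a) (Lu S (Tn S ?I d))) (Asc S a ?I (Tn S ?I d)))"
    by (simp add: triangle)
  have n: "Cmp S (Asc S a (Tn S ?I ?I) d) (Tm S (Tm S (Idm S a) (inv_arr S (Lu S ?I))) (Idm S d))
     = Cmp S (Tm S (Idm S a) (Tm S (inv_arr S (Lu S ?I)) (Idm S d))) (Asc S a ?I d)"
    using asc_nat[of "Idm S a" "inv_arr S (Lu S ?I)" "Idm S d"] by simp
  have "Cmp S (Tm S (Ru S a) (Lu S d)) (Cmp S (Asc S (Tn S a (Unit S)) (Unit S) d)
      (Tm S (Cmp S (inv_arr S (Asc S a (Unit S) (Unit S))) (Tm S (Idm S a) (inv_arr S (Lu S (Unit S))))) (Idm S d)))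
    = Cmp S (Cmp S (Tm S (Idm S a) (Lu S d)) (Cmp S (Tm S (Idm S a) (Lu S (Tn S ?I d))) (Asc S a ?I (Tn S ?I d)))) (Cmp S (Asc S (Tn S a (Unit S)) (Unit S) d)
      (Tm S (Cmp S (inv_arr S (Asc S a (Unit S) (Unit S))) (Tm S (Idm S a) (inv_arr S (Lu S (Unit S))))) (Idm S d)))"
    by (simp only: a)
  also have "\<dots> = Cmp S (Tm S (Idm S a) (Lu S d)) (Asc S a ?I d)"
    by (simp add: k_form[OF pentagon] lu_asc k_form[OF lu_asc] n)
  also have "\<dots> = Tm S (Ru S a) (Idm S d)"
    by (simp add: triangle)
  finally show ?thesis .
qed




lemma rhs_unc:
  assumes f: "f \<in> Arr S" "Dom S f = A" "Cod S f = B" and g: "g \<in> Arr S" "Dom S g = D" "Cod S g = C"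
  shows "unc S (Tn S (dl S (Tn S B C)) (dl S (dl S (Tn S (dl S (dl S A)) (dl S (dl S D))))))
     (Cmp S (parm S (dlm S (Tm S (inv_arr S (dd S A)) (inv_arr S (dd S D)))) (Idm S (Tn S B C))) (name S (Tm S f g)))
   = Cmp S (Ev S (Tn S B C) (Bot S)) (Cmp S (Tm S (Idm S (dl S (Tn S B C)))
       (Cmp S (Tm S (Cmp S f (inv_arr S (dd S A))) (Cmp S g (inv_arr S (dd S D)))) (inv_arr S (dd S (Tn S (dl S (dl S A)) (dl S (dl S D)))))))
       (Lu S (Tn S (dl S (Tn S B C)) (dl S (dl S (Tn S (dl S (dl S A)) (dl S (dl S D))))))))"
proof -
  let ?I = "Unit S" and ?E = "Tn S B C" and ?X = "dl S (Tn S B C)" and ?AD = "Tn S A D"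
  let ?ddAD = "dl S (dl S (Tn S A D))" and ?ad = "Tn S (dl S (dl S A)) (dl S (dl S D))"
  let ?dd2 = "dl S (dl S ?ad)"
  let ?v = "Tm S (inv_arr S (dd S A)) (inv_arr S (dd S D))"
  let ?ddv = "dlm S (dlm S ?v)"
  let ?N = "name S (Tm S f g)"
  let ?Fm = "Tm S (Cmp S f (inv_arr S (dd S A))) (Cmp S g (inv_arr S (dd S D)))"
  have v: "?v \<in> Arr S" "Dom S ?v = ?ad" "Cod S ?v = ?AD" by simp_all
  have N: "?N = lcur S (dl S ?AD) ?I ?E (Cmp S (Tm S f g) (Cmp S (Ru S ?AD) (Tm S (inv_arr S (dd S ?AD)) (Idm S ?I))))"
    using f g by (simp add: name_def)
  have F1: "Cmp S (Sy S ?X ?ddAD) (Tm S (Idm S ?X) ?ddv) = Cmp S (Tm S ?ddv (Idm S ?X)) (Sy S ?X ?dd2)"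
    using sy_nat[of "Idm S ?X" ?ddv] by simp
  have F2: "Cmp S (inv_arr S (Asc S ?I ?ddAD ?X)) (Tm S (Idm S ?I) (Tm S ?ddv (Idm S ?X)))
      = Cmp S (Tm S (Tm S (Idm S ?I) ?ddv) (Idm S ?X)) (inv_arr S (Asc S ?I ?dd2 ?X))"
    using asc_inv_nat[of "Idm S ?I" ?ddv "Idm S ?X"] by simp
  have F3: "Cmp S (Sy S (Tn S ?I ?ddAD) ?X) (Tm S (Tm S (Idm S ?I) ?ddv) (Idm S ?X))
      = Cmp S (Tm S (Idm S ?X) (Tm S (Idm S ?I) ?ddv)) (Sy S (Tn S ?I ?dd2) ?X)"
    using sy_nat[of "Tm S (Idm S ?I) ?ddv" "Idm S ?X"] by simp
  have F4: "Cmp S (Sy S ?I ?ddAD) (Tm S (Idm S ?I) ?ddv) = Cmp S (Tm S ?ddv (Idm S ?I)) (Sy S ?I ?dd2)"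
    using sy_nat[of "Idm S ?I" ?ddv] by simp
  have F5: "Cmp S (inv_arr S (dd S ?AD)) ?ddv = Cmp S ?v (inv_arr S (dd S ?ad))"
    using dd_inv_nat[of ?v] by simp
  have F6: "Cmp S (Ru S ?AD) (Tm S (Cmp S ?v (inv_arr S (dd S ?ad))) (Idm S ?I)) = Cmp S (Cmp S ?v (inv_arr S (dd S ?ad))) (Ru S ?dd2)"
    using ru_nat[of "Cmp S ?v (inv_arr S (dd S ?ad))"] by simp
  have F7: "Cmp S (Sy S ?dd2 ?X) (Tm S (Lu S ?dd2) (Idm S ?X)) = Cmp S (Tm S (Idm S ?X) (Lu S ?dd2)) (Sy S (Tn S ?I ?dd2) ?X)"
    using sy_nat[of "Lu S ?dd2" "Idm S ?X"] by simp
  have F9: "Cmp S (Lu S (Tn S ?dd2 ?X)) (Tm S (Idm S ?I) (Sy S ?X ?dd2)) = Cmp S (Sy S ?X ?dd2) (Lu S (Tn S ?X ?dd2))"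
    using lu_nat[of "Sy S ?X ?dd2"] by simp
  show ?thesis
    using f g post[OF F6, of "Sy S ?I ?dd2"]
       post[OF pre[OF F7[symmetric], of "Tm S (Idm S ?X) (Cmp S ?Fm (inv_arr S (dd S ?ad)))"], of "Cmp S (inv_arr S (Asc S ?I ?dd2 ?X)) (Tm S (Idm S ?I) (Sy S ?X ?dd2))"]
       post[OF F2, of "Tm S (Idm S ?I) (Sy S ?X ?dd2)"]
       post[OF F3, of "Cmp S (inv_arr S (Asc S ?I ?dd2 ?X)) (Tm S (Idm S ?I) (Sy S ?X ?dd2))"]
    apply (simp add: N parm_def unc_dlm_cmp unc_lcur F1 F4 F5 k_form[OF lu_asc_inv] F9 del: par_def)
    done
qed


lemma lhs_unc:
  assumes R: "R \<in> Arr S" "Dom S R = Tn S (dl S (dl S A)) (Unit S)" "Cod S R = dl S (Tn S (dl S (dl S D)) (dl S (Tn S B C)))"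
  shows "unc S (Tn S (dl S (Tn S B C)) (dl S (dl S (Tn S (dl S (dl S A)) (dl S (dl S D))))))
     (Cmp S (Cmp S (pa S (dl S D) (dl S A) (Tn S B C))
              (Cmp S (psym S (par S (dl S A) (Tn S B C)) (dl S D))
                 (pa S (dl S A) (Tn S B C) (dl S D))))
        (lcur S (dl S A) (Unit S) (par S (Tn S B C) (dl S D)) R))
   = Cmp S (unc S (Tn S (dl S (dl S D)) (dl S (Tn S B C))) R)
      (Cmp S (Tm S (Sy S (Unit S) (dl S (dl S A))) (Idm S (Tn S (dl S (dl S D)) (dl S (Tn S B C)))))
        (Cmp S (inv_arr S (Asc S (Unit S) (dl S (dl S A)) (Tn S (dl S (dl S D)) (dl S (Tn S B C)))))
          (Tm S (Idm S (Unit S))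
             (Cmp S (Sy S (Tn S (dl S (dl S D)) (dl S (Tn S B C))) (dl S (dl S A)))
               (Cmp S (inv_arr S (Asc S (dl S (dl S D)) (dl S (Tn S B C)) (dl S (dl S A))))
                 (Cmp S (Sy S (Tn S (dl S (Tn S B C)) (dl S (dl S A))) (dl S (dl S D)))
                   (Cmp S (inv_arr S (Asc S (dl S (Tn S B C)) (dl S (dl S A)) (dl S (dl S D))))
                      (Tm S (Idm S (dl S (Tn S B C))) (inv_arr S (dd S (Tn S (dl S (dl S A)) (dl S (dl S D)))))))))))))"
proof -
  let ?I = "Unit S" and ?X = "dl S (Tn S B C)" and ?a = "dl S (dl S A)" and ?d = "dl S (dl S D)"
  let ?V = "Tn S ?d ?X" and ?Xa = "Tn S ?X ?a"
  let ?k1 = "Cmp S (inv_arr S (Asc S ?X ?a ?d)) (Tm S (Idm S ?X) (inv_arr S (dd S (Tn S ?a ?d))))"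
  let ?M = "Cmp S (Sy S ?V ?a) (Cmp S (inv_arr S (Asc S ?d ?X ?a)) (Cmp S (Sy S ?Xa ?d) ?k1))"
  have G1: "Cmp S (Sy S (dl S (dl S ?Xa)) ?d) (Tm S (dd S ?Xa) (Idm S ?d)) = Cmp S (Tm S (Idm S ?d) (dd S ?Xa)) (Sy S ?Xa ?d)"
    using sy_nat[of "dd S ?Xa" "Idm S ?d"] by simp
  have G2: "Cmp S (Sy S (dl S (dl S ?V)) ?a) (Tm S (dd S ?V) (Idm S ?a)) = Cmp S (Tm S (Idm S ?a) (dd S ?V)) (Sy S ?V ?a)"
    using sy_nat[of "dd S ?V" "Idm S ?a"] by simp
  have G3: "Cmp S (inv_arr S (Asc S ?I ?a (dl S (dl S ?V)))) (Tm S (Idm S ?I) (Tm S (Idm S ?a) (dd S ?V)))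
      = Cmp S (Tm S (Idm S (Tn S ?I ?a)) (dd S ?V)) (inv_arr S (Asc S ?I ?a ?V))"
    using asc_inv_nat[of "Idm S ?I" "Idm S ?a" "dd S ?V"] by simp
  show ?thesis
    using R post[OF G1, of ?k1]
      post[OF G2, of "Cmp S (inv_arr S (Asc S ?d ?X ?a)) (Cmp S (Sy S ?Xa ?d) ?k1)"]
      post[OF G3, of "Tm S (Idm S ?I) ?M"]
    by (simp add: pa_def psym_def unc_dlm_cmp unc_lcur_dl)
qed


lemma rotation_k:
  assumes "k \<in> Arr S" "Cod S k = Tn S X (Tn S a d)"
  shows "Cmp S (Sy S (Tn S a d) X) (Cmp S (inv_arr S (Asc S a d X)) (Cmp S (Sy S (Tn S d X) a) (Cmp S (inv_arr S (Asc S d X a))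
     (Cmp S (Sy S (Tn S X a) d) (Cmp S (inv_arr S (Asc S X a d)) k))))) = k"
  using assms post[OF rotation[of a d X], of k] by simp

lemma lhs_final:
  assumes f: "f \<in> Arr S" "Dom S f = A" "Cod S f = B" and g: "g \<in> Arr S" "Dom S g = D" "Cod S g = C"
  defines "p \<equiv> Cmp S f (Cmp S (Ru S A) (Tm S (inv_arr S (dd S A)) (Idm S (Unit S))))"
    and "q \<equiv> Cmp S (Cmp S g (Cmp S (Ru S D) (Tm S (inv_arr S (dd S D)) (Idm S (Unit S))))) (Sy S (Unit S) (dl S (dl S D)))"
  shows "Cmp S (unc S (Tn S (dl S (dl S D)) (dl S (Tn S B C)))
      (cur S (Tn S (dl S (dl S A)) (Unit S)) (dl S D) (Tn S B C)
         (Cmp S (Tm S p q) (Cmp S (Asc S (Tn S (dl S (dl S A)) (Unit S)) (Unit S) (dl S (dl S D)))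
            (Tm S (Cmp S (inv_arr S (Asc S (dl S (dl S A)) (Unit S) (Unit S))) (Tm S (Idm S (dl S (dl S A))) (inv_arr S (Lu S (Unit S))))) (Idm S (dl S (dl S D))))))))
      (Cmp S (Tm S (Sy S (Unit S) (dl S (dl S A))) (Idm S (Tn S (dl S (dl S D)) (dl S (Tn S B C)))))
        (Cmp S (inv_arr S (Asc S (Unit S) (dl S (dl S A)) (Tn S (dl S (dl S D)) (dl S (Tn S B C)))))
          (Tm S (Idm S (Unit S))
             (Cmp S (Sy S (Tn S (dl S (dl S D)) (dl S (Tn S B C))) (dl S (dl S A)))
               (Cmp S (inv_arr S (Asc S (dl S (dl S D)) (dl S (Tn S B C)) (dl S (dl S A))))
                 (Cmp S (Sy S (Tn S (dl S (Tn S B C)) (dl S (dl S A))) (dl S (dl S D)))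
                   (Cmp S (inv_arr S (Asc S (dl S (Tn S B C)) (dl S (dl S A)) (dl S (dl S D))))
                      (Tm S (Idm S (dl S (Tn S B C))) (inv_arr S (dd S (Tn S (dl S (dl S A)) (dl S (dl S D)))))))))))))
   = Cmp S (Ev S (Tn S B C) (Bot S)) (Cmp S (Tm S (Idm S (dl S (Tn S B C)))
       (Cmp S (Tm S (Cmp S f (inv_arr S (dd S A))) (Cmp S g (inv_arr S (dd S D)))) (inv_arr S (dd S (Tn S (dl S (dl S A)) (dl S (dl S D)))))))
       (Lu S (Tn S (dl S (Tn S B C)) (dl S (dl S (Tn S (dl S (dl S A)) (dl S (dl S D))))))))"
proof -
  let ?I = "Unit S" and ?X = "dl S (Tn S B C)" and ?a = "dl S (dl S A)" and ?d = "dl S (dl S D)"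
  let ?V = "Tn S ?d ?X" and ?Xa = "Tn S ?X ?a" and ?ad = "Tn S ?a ?d"
  let ?fa = "Cmp S f (inv_arr S (dd S A))" and ?gd = "Cmp S g (inv_arr S (dd S D))"
  let ?Fm = "Tm S ?fa ?gd"
  let ?k1 = "Cmp S (inv_arr S (Asc S ?X ?a ?d)) (Tm S (Idm S ?X) (inv_arr S (dd S (Tn S ?a ?d))))"
  let ?M = "Cmp S (Sy S ?V ?a) (Cmp S (inv_arr S (Asc S ?d ?X ?a)) (Cmp S (Sy S ?Xa ?d) ?k1))"
  let ?rest = "Cmp S (Tm S (Sy S ?I ?a) (Idm S ?V)) (Cmp S (inv_arr S (Asc S ?I ?a ?V)) (Tm S (Idm S ?I) ?M))"
  have H1: "Cmp S (Ru S A) (Tm S (inv_arr S (dd S A)) (Idm S ?I)) = Cmp S (inv_arr S (dd S A)) (Ru S ?a)"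
    using ru_nat[of "inv_arr S (dd S A)"] by simp
  have H2: "Cmp S (Ru S D) (Tm S (inv_arr S (dd S D)) (Idm S ?I)) = Cmp S (inv_arr S (dd S D)) (Ru S ?d)"
    using ru_nat[of "inv_arr S (dd S D)"] by simp
  have H3: "Cmp S ?Fm (Cmp S (Tm S (Ru S ?a) (Lu S ?d)) (Cmp S (Asc S (Tn S ?a ?I) ?I ?d)
      (Tm S (Cmp S (inv_arr S (Asc S ?a ?I ?I)) (Tm S (Idm S ?a) (inv_arr S (Lu S ?I)))) (Idm S ?d))))
     = Cmp S ?Fm (Tm S (Ru S ?a) (Idm S ?d))"
    by (rule pre[OF kprime])
  have H4: "Cmp S (Sy S ?ad ?X) (Tm S (Tm S (Ru S ?a) (Idm S ?d)) (Idm S ?X))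
      = Cmp S (Tm S (Idm S ?X) (Tm S (Ru S ?a) (Idm S ?d))) (Sy S (Tn S (Tn S ?a ?I) ?d) ?X)"
    using sy_nat[of "Tm S (Ru S ?a) (Idm S ?d)" "Idm S ?X"] by simp
  have H5: "Cmp S (inv_arr S (Asc S ?a ?d ?X)) (Tm S (Ru S ?a) (Tm S (Idm S ?d) (Idm S ?X)))
      = Cmp S (Tm S (Tm S (Ru S ?a) (Idm S ?d)) (Idm S ?X)) (inv_arr S (Asc S (Tn S ?a ?I) ?d ?X))"
    using asc_inv_nat[of "Ru S ?a" "Idm S ?d" "Idm S ?X"] by simp
  have H6: "Cmp S (Lu S (Tn S ?a ?V)) (Tm S (Idm S ?I) ?M) = Cmp S ?M (Lu S (Tn S ?X (dl S (dl S ?ad))))"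
    using lu_nat[of ?M] by simp
  have H7: "Cmp S (Sy S (Tn S B C) ?X) (Tm S (Tm S (Cmp S f (Cmp S (inv_arr S (dd S A)) (Ru S ?a))) ?gd) (Idm S ?X))
     = Cmp S (Tm S (Idm S ?X) (Tm S (Cmp S f (Cmp S (inv_arr S (dd S A)) (Ru S ?a))) ?gd)) (Sy S (Tn S (Tn S ?a ?I) ?d) ?X)"
    using sy_nat[of "Tm S (Cmp S f (Cmp S (inv_arr S (dd S A)) (Ru S ?a))) ?gd" "Idm S ?X"] f g by simp
  show ?thesis
    using f g H3 post[OF H7, of "Cmp S (inv_arr S (Asc S (Tn S ?a ?I) ?d ?X)) ?rest"]
      post[OF pre[OF H4[symmetric], of "Tm S (Idm S ?X) ?Fm"], of "Cmp S (inv_arr S (Asc S (Tn S ?a ?I) ?d ?X)) ?rest"]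
      post[OF H5[symmetric], of ?rest]
    by (simp add: p_def q_def unc_cur H1 H2 k_form[OF lu_asc_inv] H6 rotation_k)
qed


lemma main:
  assumes fh: "f \<in> hom S A B" and gh: "g \<in> hom S D C"
  shows "Cmp S
           (Cmp S (pa S (dl S D) (dl S A) (Tn S B C))
              (Cmp S (psym S (par S (dl S A) (Tn S B C)) (dl S D))
                 (pa S (dl S A) (Tn S B C) (dl S D))))
           (Cmp S (tau S (dl S A) B C (dl S D))
              (Cmp S (Tm S (name S f) (Cmp S (psym S (dl S D) C) (name S g)))
                 (inv_arr S (Lu S (Unit S)))))
       = Cmp S (parm S (dlm S (Tm S (inv_arr S (dd S A)) (inv_arr S (dd S D)))) (Idm S (Tn S B C)))
           (name S (Tm S f g))"
proof -
  have f: "f \<in> Arr S" "Dom S f = A" "Cod S f = B" using fh by (auto simp: hom_def)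
  have g: "g \<in> Arr S" "Dom S g = D" "Cod S g = C" using gh by (auto simp: hom_def)
  let ?I = "Unit S"
  define p where "p = Cmp S f (Cmp S (Ru S A) (Tm S (inv_arr S (dd S A)) (Idm S (Unit S))))"
  define q where "q = Cmp S (Cmp S g (Cmp S (Ru S D) (Tm S (inv_arr S (dd S D)) (Idm S (Unit S))))) (Sy S (Unit S) (dl S (dl S D)))"
  have p: "p \<in> Arr S" "Dom S p = Tn S (dl S (dl S A)) ?I" "Cod S p = B" using f by (simp_all add: p_def)
  have q: "q \<in> Arr S" "Dom S q = Tn S ?I (dl S (dl S D))" "Cod S q = C" using g by (simp_all add: q_def)
  have nf: "name S f = lcur S (dl S A) ?I B p" using f by (simp add: name_def p_def)
  have ng: "Cmp S (psym S (dl S D) C) (name S g) = cur S ?I (dl S D) C q"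
    using g by (simp add: name_def q_def lcur_def psym_invol_k)
  define R where "R = cur S (Tn S (dl S (dl S A)) (Unit S)) (dl S D) (Tn S B C)
         (Cmp S (Tm S p q) (Cmp S (Asc S (Tn S (dl S (dl S A)) (Unit S)) (Unit S) (dl S (dl S D)))
            (Tm S (Cmp S (inv_arr S (Asc S (dl S (dl S A)) (Unit S) (Unit S))) (Tm S (Idm S (dl S (dl S A))) (inv_arr S (Lu S (Unit S))))) (Idm S (dl S (dl S D))))))"
  have R: "R \<in> Arr S" "Dom S R = Tn S (dl S (dl S A)) (Unit S)" "Cod S R = dl S (Tn S (dl S (dl S D)) (dl S (Tn S B C)))"
    using p q by (simp_all add: R_def)
  have T: "Cmp S (tau S (dl S A) B C (dl S D)) (Cmp S (Tm S (name S f) (Cmp S (psym S (dl S D) C) (name S g))) (inv_arr S (Lu S (Unit S))))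
     = lcur S (dl S A) ?I (par S (Tn S B C) (dl S D)) R"
    unfolding nf ng R_def using tau_names[OF p q] by simp
  let ?Z = "Tn S (dl S (Tn S B C)) (dl S (dl S (Tn S (dl S (dl S A)) (dl S (dl S D)))))"
  let ?L = "Cmp S
           (Cmp S (pa S (dl S D) (dl S A) (Tn S B C))
              (Cmp S (psym S (par S (dl S A) (Tn S B C)) (dl S D))
                 (pa S (dl S A) (Tn S B C) (dl S D))))
           (lcur S (dl S A) ?I (par S (Tn S B C) (dl S D)) R)"
  let ?RH = "Cmp S (parm S (dlm S (Tm S (inv_arr S (dd S A)) (inv_arr S (dd S D)))) (Idm S (Tn S B C)))
           (name S (Tm S f g))"
  have u: "unc S ?Z ?L = unc S ?Z ?RH"
    apply (subst lhs_unc[OF R])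
    apply (subst rhs_unc[OF f g])
    unfolding R_def p_def q_def
    by (rule lhs_final[OF f g])
  have "?L = ?RH"
    by (rule unc_inj[OF _ _ _ _ _ u]) (use R f g in \<open>simp_all add: pa_def psym_def parm_def name_def\<close>)
  then show ?thesis unfolding T .
qed

end

theorem proposition2p10:
  fixes S :: "('o,'m) sacat"
  assumes "star_autonomous S"
    and "f \<in> hom S A B"
    and "g \<in> hom S D C"
  shows "Cmp S
           (Cmp S (pa S (dl S D) (dl S A) (Tn S B C))
              (Cmp S (psym S (par S (dl S A) (Tn S B C)) (dl S D))
                 (pa S (dl S A) (Tn S B C) (dl S D))))
           (Cmp S (tau S (dl S A) B C (dl S D))
              (Cmp S (Tm S (name S f) (Cmp S (psym S (dl S D) C) (name S g)))
                 (inv_arr S (Lu S (Unit S)))))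
       = Cmp S (parm S (dlm S (Tm S (inv_arr S (dd S A)) (inv_arr S (dd S D)))) (Idm S (Tn S B C)))
           (name S (Tm S f g))"
  using star_autonomous.main[OF assms(1) assms(2) assms(3)] .

end
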